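(* Let $0<s_1<s_2<1$, $2s_1<d<\frac{2s_1s_2}{s_2-s_1}$, and suppose $g$ satisfies $(G_1)$–$(G_3)$. Then the function $m:(0,\infty)\to\mathbb{R}$, $m(a)=m_a$, is continuous.
   Context: For $s\in(0,1)$, $|\nabla_s u|_2^2=\int_{\mathbb{R}^d\times\mathbb{R}^d}\frac{|u(x)-u(y)|^2}{|x-y|^{d+2s}}dx\,dy$; $|\cdot|_p$ is the $L^p(\mathbb{R}^d)$ norm; $H^{s_1,s_2}(\mathbb{R}^d)=\{u\in L^2(\mathbb{R}^d):|\nabla_{s_1}u|_2<\infty,\ |\nabla_{s_2}u|_2<\infty\}$. $S_a=\{u\in H^{s_1,s_2}(\mathbb{R}^d):|u|_2^2=a\}$. $g:\mathbb{R}\to\mathbb{R}$, $G(s)=\int_0^sg$, $\widetilde G(s)=\frac12g(s)s-G(s)$. $(G_1)$: $g$ continuous, odd. $(G_2)$: there exist $\alpha,\beta$ with $2+\frac{4s_2}{d}<\alpha<\beta<\frac{2d}{d-2s_1}$ and $\alpha G(s)\le g(s)s\le\beta G(s)$ for all $s$. $(G_3)$: $\widetilde G'$ exists and $\widetilde G'(s)s\ge\alpha\widetilde G(s)$ for all $s$. $I(u)=\frac12|\nabla_{s_1}u|_2^2+\frac12|\nabla_{s_2}u|_2^2-\int_{\mathbb{R}^d}G(u)dx$; $P_\infty(u)=s_1|\nabla_{s_1}u|_2^2+s_2|\nabla_{s_2}u|_2^2-d\int_{\mathbb{R}^d}\widetilde G(u)dx$; $\mathcal{P}_{\infty,a}=\{u\in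 S_a:P_\infty(u)=0\}$; $m_a=\inf_{u\in\mathcal{P}_{\infty,a}}I(u)$. *)

theory Defs
  imports "HOL-Analysis.Analysis"
begin

definition gag_sq :: "real \<Rightarrow> ('a::euclidean_space \<Rightarrow> real) \<Rightarrow> ennreal" where
  "gag_sq s u = (\<integral>\<^sup>+ p. ennreal ((u (fst p) - u (snd p))\<^sup>2
        / norm (fst p - snd p) powr (real DIM('a) + 2 * s)) \<partial>(lborel \<Otimes>\<^sub>M lborel))"

definition L2_sq :: "('a::euclidean_space \<Rightarrow> real) \<Rightarrow> ennreal" where
  "L2_sq u = (\<integral>\<^sup>+ x. ennreal ((u x)\<^sup>2) \<partial>lborel)"

definition Hs1s2 :: "real \<Rightarrow> real \<Rightarrow> ('a::euclidean_space \<Rightarrow> real) set" where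
  "Hs1s2 s1 s2 = {u. u \<in> borel_measurable lborel \<and> L2_sq u < \<infinity>
                     \<and> gag_sq s1 u < \<infinity> \<and> gag_sq s2 u < \<infinity>}"

definition Sa :: "real \<Rightarrow> real \<Rightarrow> real \<Rightarrow> ('a::euclidean_space \<Rightarrow> real) set" where
  "Sa s1 s2 a = {u \<in> Hs1s2 s1 s2. L2_sq u = ennreal a}"

text \<open>Primitive G(s) = \<integral>_0^s g (oriented interval integral).\<close>
definition Gprim :: "(real \<Rightarrow> real) \<Rightarrow> real \<Rightarrow> real" where
  "Gprim g s = (LBINT t=0..s. g t)"

definition Gtil :: "(real \<Rightarrow> real) \<Rightarrow> real \<Rightarrow> real" where
  "Gtil g s = g s * s / 2 - Gprim g s"

definition Ifun :: "real \<Rightarrow> real \<Rightarrow> (real \<Rightarrow> real) \<Rightarrow> ('a::euclidean_space \<Rightarrow> real) \<Rightarrow> real" where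
  "Ifun s1 s2 g u = enn2real (gag_sq s1 u) / 2 + enn2real (gag_sq s2 u) / 2
                    - (\<integral>x. Gprim g (u x) \<partial>lborel)"

definition Pinf :: "real \<Rightarrow> real \<Rightarrow> (real \<Rightarrow> real) \<Rightarrow> ('a::euclidean_space \<Rightarrow> real) \<Rightarrow> real" where
  "Pinf s1 s2 g u = s1 * enn2real (gag_sq s1 u) + s2 * enn2real (gag_sq s2 u)
                    - real DIM('a) * (\<integral>x. Gtil g (u x) \<partial>lborel)"

definition Pmfd :: "real \<Rightarrow> real \<Rightarrow> (real \<Rightarrow> real) \<Rightarrow> real \<Rightarrow> ('a::euclidean_space \<Rightarrow> real) set" where
  "Pmfd s1 s2 g a = {u \<in> Sa s1 s2 a. Pinf s1 s2 g u = 0}"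

text \<open>m_a = inf of I over the Pohozaev manifold; the type 'a fixes the dimension d.\<close>
definition m_level :: "'a::euclidean_space itself \<Rightarrow> real \<Rightarrow> real \<Rightarrow> (real \<Rightarrow> real) \<Rightarrow> real \<Rightarrow> real" where
  "m_level _ s1 s2 g a = Inf (Ifun s1 s2 g ` (Pmfd s1 s2 g a :: ('a \<Rightarrow> real) set))"

end

theory Submission
  imports Defs
begin


lemma mono_via_deriv:
  fixes f f' :: "real \<Rightarrow> real"
  assumes "\<And>x. 0 < x \<Longrightarrow> (f has_real_derivative f' x) (at x)" "\<And>x. 0 < x \<Longrightarrow> a \<le> x \<Longrightarrow> x \<le> b \<Longrightarrow> f' x \<ge> 0"
    "0 < a" "a \<le> b"
  shows "f a \<le> f b"
  using assms by (intro DERIV_nonneg_imp_nondecreasing[OF \<open>a \<le> b\<close>]) (metis less_le_trans)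

locale gset =
  fixes g :: "real \<Rightarrow> real" and \<alpha> \<beta> :: real
  assumes gcont: "continuous_on UNIV g"
  and a2: "2 < \<alpha>" and ab: "\<alpha> < \<beta>"
  and G2a: "\<And>s. \<alpha> * Gprim g s \<le> g s * s" and G2b: "\<And>s. g s * s \<le> \<beta> * Gprim g s"
  and G3d: "\<And>s. Gtil g differentiable (at s)" and G3: "\<And>s. deriv (Gtil g) s * s \<ge> \<alpha> * Gtil g s"
begin

lemma Gprim_deriv: "(Gprim g has_real_derivative g x) (at x)"
proof -
  define a where "a = -\<bar>x\<bar> - 1"
  define b where "b = \<bar>x\<bar> + 1"
  have "((\<lambda>u. LBINT y=0..u. g y) has_vector_derivative g x) (at x within {a..b})"
    using interval_integral_FTC2[of a 0 b g x] continuous_on_subset[OF gcont] by (auto simp: a_def b_def zero_ereal_def)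
  then have "((\<lambda>u. LBINT y=0..u. g y) has_vector_derivative g x) (at x within {a<..<b})"
    by (rule has_vector_derivative_within_subset) auto
  then have "((\<lambda>u. LBINT y=0..u. g y) has_vector_derivative g x) (at x)"
    by (subst (asm) has_vector_derivative_within_open) (auto simp: a_def b_def)
  then show ?thesis
    by (simp add: has_real_derivative_iff_has_vector_derivative Gprim_def[abs_def])
qed

lemma Gtil_deriv: "(Gtil g has_real_derivative deriv (Gtil g) x) (at x)"
  using G3d DERIV_deriv_iff_real_differentiable by blast

lemma G_mono_a:
  assumes "0 < l" "l \<le> l'"
  shows "Gprim g (l * s) * l powr (-\<alpha>) \<le> Gprim g (l' * s) * l' powr (-\<alpha>)"
proof (rule mono_via_deriv[where f="\<lambda>l. Gprim g (l * s) * l powr (-\<alpha>)"])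
  fix x :: real assume x: "0 < x"
  show "((\<lambda>l. Gprim g (l * s) * l powr (-\<alpha>)) has_real_derivative
     (g (x * s) * s * x powr (-\<alpha>) + Gprim g (x * s) * (-\<alpha> * x powr (-\<alpha> - 1)))) (at x)"
    using x by (auto intro!: derivative_eq_intros DERIV_chain2[OF Gprim_deriv] simp: powr_diff)
  have "g (x * s) * s * x powr (-\<alpha>) + Gprim g (x * s) * (-\<alpha> * x powr (-\<alpha> - 1))
      = x powr (-\<alpha> - 1) * (g (x * s) * (x * s) - \<alpha> * Gprim g (x * s))"
    using x by (simp add: powr_diff powr_minus field_simps)
  also have "\<dots> \<ge> 0" using G2a[of "x * s"] by simp
  finally show "g (x * s) * s * x powr (-\<alpha>) + Gprim g (x * s) * (-\<alpha> * x powr (-\<alpha> - 1)) \<ge> 0" .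
qed (use assms in auto)

lemma G_mono_b:
  assumes "0 < l" "l \<le> l'"
  shows "Gprim g (l' * s) * l' powr (-\<beta>) \<le> Gprim g (l * s) * l powr (-\<beta>)"
proof -
  have "- (Gprim g (l * s) * l powr (-\<beta>)) \<le> - (Gprim g (l' * s) * l' powr (-\<beta>))"
  proof (rule mono_via_deriv[where f="\<lambda>l. - (Gprim g (l * s) * l powr (-\<beta>))"])
    fix x :: real assume x: "0 < x"
    show "((\<lambda>l. - (Gprim g (l * s) * l powr (-\<beta>))) has_real_derivative
       - (g (x * s) * s * x powr (-\<beta>) + Gprim g (x * s) * (-\<beta> * x powr (-\<beta> - 1)))) (at x)"
      using x by (auto intro!: derivative_eq_intros DERIV_chain2[OF Gprim_deriv] simp: powr_diff)
    have "- (g (x * s) * s * x powr (-\<beta>) + Gprim g (x * s) * (-\<beta> * x powr (-\<beta> - 1)))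
        = x powr (-\<beta> - 1) * (\<beta> * Gprim g (x * s) - g (x * s) * (x * s))"
      using x by (simp add: powr_diff powr_minus field_simps)
    also have "\<dots> \<ge> 0" using G2b[of "x * s"] by simp
    finally show "- (g (x * s) * s * x powr (-\<beta>) + Gprim g (x * s) * (-\<beta> * x powr (-\<beta> - 1))) \<ge> 0" .
  qed (use assms in auto)
  then show ?thesis by simp
qed

lemma Gt_mono:
  assumes "0 < l" "l \<le> l'"
  shows "Gtil g (l * s) * l powr (-\<alpha>) \<le> Gtil g (l' * s) * l' powr (-\<alpha>)"
proof (rule mono_via_deriv[where f="\<lambda>l. Gtil g (l * s) * l powr (-\<alpha>)"])
  fix x :: real assume x: "0 < x"
  show "((\<lambda>l. Gtil g (l * s) * l powr (-\<alpha>)) has_real_derivative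
     (deriv (Gtil g) (x * s) * s * x powr (-\<alpha>) + Gtil g (x * s) * (-\<alpha> * x powr (-\<alpha> - 1)))) (at x)"
    using x by (auto intro!: derivative_eq_intros DERIV_chain2[OF Gtil_deriv] simp: powr_diff)
  have "deriv (Gtil g) (x * s) * s * x powr (-\<alpha>) + Gtil g (x * s) * (-\<alpha> * x powr (-\<alpha> - 1))
      = x powr (-\<alpha> - 1) * (deriv (Gtil g) (x * s) * (x * s) - \<alpha> * Gtil g (x * s))"
    using x by (simp add: powr_diff powr_minus field_simps)
  also have "\<dots> \<ge> 0" using G3[of "x * s"] by simp
  finally show "deriv (Gtil g) (x * s) * s * x powr (-\<alpha>) + Gtil g (x * s) * (-\<alpha> * x powr (-\<alpha> - 1)) \<ge> 0" .
qed (use assms in auto)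

lemma G_nonneg: "Gprim g s \<ge> 0"
proof (rule ccontr)
  assume neg: "\<not> Gprim g s \<ge> 0"
  define A where "A = (1/2::real) powr (-\<alpha>)"
  define B where "B = (1/2::real) powr (-\<beta>)"
  have 1: "Gprim g ((1/2) * s) * A \<le> Gprim g (1 * s) * 1 powr (-\<alpha>)"
    unfolding A_def by (rule G_mono_a) auto
  have 2: "Gprim g (1 * s) * 1 powr (-\<beta>) \<le> Gprim g ((1/2) * s) * B"
    unfolding B_def by (rule G_mono_b) auto
  have p: "A > 0" "B > 0" by (auto simp: A_def B_def)
  have AB: "A < B" unfolding A_def B_def
    using ab by (intro powr_less_mono') auto
  from 1 p have 3: "Gprim g ((1/2) * s) \<le> Gprim g s / A"
    by (simp add: pos_le_divide_eq)
  have "Gprim g s \<le> Gprim g ((1/2) * s) * B" using 2 by simp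
  also have "\<dots> \<le> Gprim g s / A * B" using 3 p by (intro mult_right_mono) auto
  finally have 4: "Gprim g s \<le> Gprim g s * (B / A)" by simp
  have "B / A > 1" using p AB by simp
  then have "Gprim g s * (B / A) < Gprim g s * 1" using neg
    by (intro mult_strict_left_mono_neg) auto
  with 4 show False by simp
qed

lemma Gtil_eq: "Gtil g s = g s * s / 2 - Gprim g s" by (simp add: Gtil_def)

lemma Gt_lower: "Gtil g s \<ge> (\<alpha> - 2) / 2 * Gprim g s"
  using G2a[of s] by (simp add: Gtil_def field_simps)

lemma Gt_upper: "Gtil g s \<le> (\<beta> - 2) / 2 * Gprim g s"
  using G2b[of s] by (simp add: Gtil_def field_simps)

lemma Gt_nonneg: "Gtil g s \<ge> 0"
proof -
  have "(\<alpha> - 2) / 2 * Gprim g s \<ge> 0" using G_nonneg[of s] a2 by simp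
  then show ?thesis using Gt_lower[of s] by linarith
qed

lemma G_le_Gt: "Gprim g s \<le> 2 / (\<alpha> - 2) * Gtil g s"
  using Gt_lower[of s] a2 by (simp add: field_simps)

lemma G_ge1: assumes "1 \<le> l" shows "Gprim g (l * s) \<ge> l powr \<alpha> * Gprim g s"
proof -
  have "Gprim g (1 * s) * 1 powr (-\<alpha>) \<le> Gprim g (l * s) * l powr (-\<alpha>)"
    using assms by (intro G_mono_a) auto
  then show ?thesis using assms by (simp add: powr_minus field_simps)
qed

lemma G_le1: assumes "1 \<le> l" shows "Gprim g (l * s) \<le> l powr \<beta> * Gprim g s"
proof -
  have "Gprim g (l * s) * l powr (-\<beta>) \<le> Gprim g (1 * s) * 1 powr (-\<beta>)"
    using assms by (intro G_mono_b) auto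
  then show ?thesis using assms by (simp add: powr_minus field_simps)
qed

lemma G_ge2: assumes "0 < l" "l \<le> 1" shows "Gprim g (l * s) \<ge> l powr \<beta> * Gprim g s"
proof -
  have "Gprim g (1 * s) * 1 powr (-\<beta>) \<le> Gprim g (l * s) * l powr (-\<beta>)"
    using assms by (intro G_mono_b) auto
  then show ?thesis using assms by (simp add: powr_minus field_simps)
qed

lemma G_le2: assumes "0 < l" "l \<le> 1" shows "Gprim g (l * s) \<le> l powr \<alpha> * Gprim g s"
proof -
  have "Gprim g (l * s) * l powr (-\<alpha>) \<le> Gprim g (1 * s) * 1 powr (-\<alpha>)"
    using assms by (intro G_mono_a) auto
  then show ?thesis using assms by (simp add: powr_minus field_simps)
qed

lemma Gt_ge1: assumes "1 \<le> l" shows "Gtil g (l * s) \<ge> l powr \<alpha> * Gtil g s"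
proof -
  have "Gtil g (1 * s) * 1 powr (-\<alpha>) \<le> Gtil g (l * s) * l powr (-\<alpha>)"
    using assms by (intro Gt_mono) auto
  then show ?thesis using assms by (simp add: powr_minus field_simps)
qed

lemma Gt_le2: assumes "0 < l" "l \<le> 1" shows "Gtil g (l * s) \<le> l powr \<alpha> * Gtil g s"
proof -
  have "Gtil g (l * s) * l powr (-\<alpha>) \<le> Gtil g (1 * s) * 1 powr (-\<alpha>)"
    using assms by (intro Gt_mono) auto
  then show ?thesis using assms by (simp add: powr_minus field_simps)
qed

lemma G_bound: assumes "0 < l" shows "Gprim g (l * s) \<le> (l powr \<alpha> + l powr \<beta>) * Gprim g s"
proof -
  have a: "l powr \<alpha> * Gprim g s \<le> (l powr \<alpha> + l powr \<beta>) * Gprim g s"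
    "l powr \<beta> * Gprim g s \<le> (l powr \<alpha> + l powr \<beta>) * Gprim g s"
    using G_nonneg[of s] by (auto simp: distrib_right)
  show ?thesis
  proof (cases "l \<le> 1")
    case True
    then show ?thesis using G_le2[OF assms True, of s] a by linarith
  next
    case False
    then show ?thesis using G_le1[of l s] a by linarith
  qed
qed

lemma Gt_bound: assumes "0 < l"
  shows "Gtil g (l * s) \<le> (\<beta> - 2) / (\<alpha> - 2) * (l powr \<alpha> + l powr \<beta>) * Gtil g s"
proof -
  have "Gtil g (l * s) \<le> (\<beta> - 2) / 2 * Gprim g (l * s)" by (rule Gt_upper)
  also have "\<dots> \<le> (\<beta> - 2) / 2 * ((l powr \<alpha> + l powr \<beta>) * Gprim g s)"
    using G_bound[OF assms, of s] ab a2 by (intro mult_left_mono) auto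
  also have "\<dots> \<le> (\<beta> - 2) / 2 * ((l powr \<alpha> + l powr \<beta>) * (2 / (\<alpha> - 2) * Gtil g s))"
    using G_le_Gt[of s] ab a2 by (intro mult_left_mono) auto
  also have "\<dots> = (\<beta> - 2) / (\<alpha> - 2) * (l powr \<alpha> + l powr \<beta>) * Gtil g s"
    using a2 by (simp add: field_simps)
  finally show ?thesis .
qed

lemma G_scale_ge: assumes "0 < l" shows "Gprim g (l * s) \<ge> min (l powr 2) (l powr \<beta>) * Gprim g s"
proof (cases "l \<le> 1")
  case True
  have "min (l powr 2) (l powr \<beta>) * Gprim g s \<le> l powr \<beta> * Gprim g s"
    using G_nonneg[of s] by (intro mult_right_mono) auto
  then show ?thesis using G_ge2[OF assms True, of s] by linarith
next
  case False
  have "l powr 2 \<le> l powr \<alpha>" using False a2 by (intro powr_mono) auto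
  then have "min (l powr 2) (l powr \<beta>) * Gprim g s \<le> l powr \<alpha> * Gprim g s"
    using G_nonneg[of s] by (intro mult_right_mono) auto
  then show ?thesis using G_ge1[of l s] False by linarith
qed

end


lemma slope_mono:
  fixes t e1 e2 :: real
  assumes "0 < t" "0 < e1" "e1 \<le> e2"
  shows "(t powr e1 - 1) / e1 \<le> (t powr e2 - 1) / e2"
proof (rule mono_via_deriv[where f="\<lambda>e. (t powr e - 1) / e"])
  fix x :: real assume x: "0 < x"
  have d: "((\<lambda>e. t powr e) has_real_derivative t powr x * ln t) (at x)"
    using DERIV_powr[OF DERIV_const _ DERIV_ident, of t x] \<open>0 < t\<close> by simp
  show "((\<lambda>e. (t powr e - 1) / e) has_real_derivative
      ((t powr x * ln t) * x - (t powr x - 1) * 1) / (x * x)) (at x)"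
  proof -
    have d': "((\<lambda>e. t powr e - 1) has_real_derivative t powr x * ln t) (at x)"
      using DERIV_diff[OF d DERIV_const] by simp
    show ?thesis using DERIV_divide[OF d' DERIV_ident] x by simp
  qed
  define y where "y = x * ln t"
  have tx: "t powr x = exp y" using \<open>0 < t\<close> by (simp add: powr_def y_def mult.commute)
  have "1 - y \<le> exp (- y)" using exp_ge_add_one_self[of "-y"] by simp
  then have "(1 - y) * exp y \<le> exp (-y) * exp y" by (intro mult_right_mono) auto
  then have "(1 - y) * exp y \<le> 1" by (simp add: exp_minus)
  then have "0 \<le> (t powr x * ln t) * x - (t powr x - 1) * 1"
    unfolding tx by (simp add: y_def algebra_simps)
  then show "0 \<le> ((t powr x * ln t) * x - (t powr x - 1) * 1) / (x * x)" by simp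
qed (use assms in auto)

context gset begin

lemma fiber_pt:
  fixes D t \<sigma> :: real
  assumes t: "0 < t" and D: "0 < D"
  defines "\<gamma> \<equiv> D * (\<alpha> - 2) / 2"
  shows "t powr (-D) * Gprim g (t powr (D/2) * \<sigma>) - Gprim g \<sigma>
     \<ge> D * Gtil g \<sigma> * ((t powr \<gamma> - 1) / \<gamma>)"
proof -
  have \<gamma>: "\<gamma> > 0" using a2 D by (simp add: \<gamma>_def)
  define \<psi> where "\<psi> x = x powr (-D) * Gprim g (x powr (D/2) * \<sigma>) - D * Gtil g \<sigma> * ((x powr \<gamma> - 1) / \<gamma>)" for x
  define \<psi>' where "\<psi>' x = D * x powr (-D-1) * (Gtil g (x powr (D/2) * \<sigma>) - x powr (D * \<alpha> / 2) * Gtil g \<sigma>)" for x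
  have der: "(\<psi> has_real_derivative \<psi>' x) (at x)" if x: "0 < x" for x
  proof -
    have d1: "((\<lambda>x. x powr (-D)) has_real_derivative (-D) * x powr (-D - 1)) (at x)"
      using has_real_derivative_powr[OF x, of "-D"] by simp
    have d2: "((\<lambda>x. x powr (D/2) * \<sigma>) has_real_derivative (D/2) * x powr (D/2 - 1) * \<sigma>) (at x)"
      using has_real_derivative_powr[OF x, of "D/2"] by (intro DERIV_cmult_right) simp
    have d3: "((\<lambda>x. Gprim g (x powr (D/2) * \<sigma>)) has_real_derivative
        g (x powr (D/2) * \<sigma>) * ((D/2) * x powr (D/2 - 1) * \<sigma>)) (at x)"
      by (rule DERIV_chain2[OF Gprim_deriv d2])
    have d4: "((\<lambda>x. (x powr \<gamma> - 1) / \<gamma>) has_real_derivative (\<gamma> * x powr (\<gamma> - 1)) / \<gamma>) (at x)"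
    proof -
      have "((\<lambda>x. x powr \<gamma> - 1) has_real_derivative \<gamma> * x powr (\<gamma> - 1)) (at x)"
        using DERIV_diff[OF has_real_derivative_powr[OF x, of \<gamma>] DERIV_const] by simp
      then show ?thesis by (rule DERIV_cdivide)
    qed
    have "(\<psi> has_real_derivative
       ((-D) * x powr (-D - 1) * Gprim g (x powr (D/2) * \<sigma>) + g (x powr (D/2) * \<sigma>) * ((D/2) * x powr (D/2 - 1) * \<sigma>) * x powr (-D))
        - D * Gtil g \<sigma> * ((\<gamma> * x powr (\<gamma> - 1)) / \<gamma>)) (at x)"
      unfolding \<psi>_def by (intro DERIV_diff DERIV_mult d1 d3 DERIV_cmult d4)
    moreover have "((-D) * x powr (-D - 1) * Gprim g (x powr (D/2) * \<sigma>) + g (x powr (D/2) * \<sigma>) * ((D/2) * x powr (D/2 - 1) * \<sigma>) * x powr (-D))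
        - D * Gtil g \<sigma> * ((\<gamma> * x powr (\<gamma> - 1)) / \<gamma>) = \<psi>' x"
    proof -
      have e1: "x powr (-D) * x powr (D/2 - 1) = x powr (-D-1) * x powr (D/2)"
        by (simp add: powr_add[symmetric])
      have e2: "x powr (\<gamma> - 1) = x powr (-D-1) * x powr (D * \<alpha> / 2)"
      proof -
        have "\<gamma> - 1 = (-D-1) + D * \<alpha> / 2" by (simp add: \<gamma>_def field_simps)
        then show ?thesis by (simp only: powr_add)
      qed
      have "g (x powr (D/2) * \<sigma>) * ((D/2) * x powr (D/2 - 1) * \<sigma>) * x powr (-D)
          = D * x powr (-D-1) * (g (x powr (D/2) * \<sigma>) * (x powr (D/2) * \<sigma>) / 2)"
        using e1 by (simp add: algebra_simps)
      then show ?thesis unfolding \<psi>'_def Gtil_def e2 using \<gamma>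
        by (simp add: algebra_simps)
    qed
    ultimately show ?thesis by simp
  qed
  have \<psi>1: "\<psi> 1 = Gprim g \<sigma>" by (simp add: \<psi>_def)
  have ge: "\<psi> t \<ge> \<psi> 1"
  proof (cases "1 \<le> t")
    case True
    show ?thesis
    proof (rule mono_via_deriv[where f=\<psi> and f'=\<psi>', OF der _ _ True])
      fix x :: real assume x: "0 < x" "1 \<le> x" "x \<le> t"
      have "1 \<le> x powr (D/2)" using x D by (simp add: ge_one_powr_ge_zero)
      from Gt_ge1[OF this, of \<sigma>]
      have "Gtil g (x powr (D/2) * \<sigma>) \<ge> x powr (D * \<alpha> / 2) * Gtil g \<sigma>"
        using x by (simp add: powr_powr)
      then show "0 \<le> \<psi>' x" unfolding \<psi>'_def using x D by simp
    qed auto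
  next
    case False
    have "- \<psi> t \<le> - \<psi> 1"
    proof (rule mono_via_deriv[where f="\<lambda>x. - \<psi> x" and f'="\<lambda>x. - \<psi>' x"])
      show "\<And>x. 0 < x \<Longrightarrow> ((\<lambda>x. - \<psi> x) has_real_derivative - \<psi>' x) (at x)"
        by (intro DERIV_minus der)
      fix x :: real assume x: "0 < x" "t \<le> x" "x \<le> 1"
      have p: "0 < x powr (D/2)" "x powr (D/2) \<le> 1" using x D by (auto simp: powr_le1)
      from Gt_le2[OF p, of \<sigma>]
      have "Gtil g (x powr (D/2) * \<sigma>) \<le> x powr (D * \<alpha> / 2) * Gtil g \<sigma>"
        using x by (simp add: powr_powr)
      then show "0 \<le> - \<psi>' x" unfolding \<psi>'_def using x D
        by (simp add: mult_nonneg_nonpos)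
    qed (use t False in auto)
    then show ?thesis by simp
  qed
  then show ?thesis using \<psi>1 by (simp add: \<psi>_def)
qed

end


lemma nn_integral_scale:
  fixes f :: "'a::euclidean_space \<Rightarrow> ennreal" and c :: real
  assumes f[measurable]: "f \<in> borel_measurable borel" and c: "c \<noteq> 0"
  shows "(\<integral>\<^sup>+x. f x \<partial>lborel) = ennreal (\<bar>c\<bar>^DIM('a)) * (\<integral>\<^sup>+x. f (c *\<^sub>R x) \<partial>lborel)"
  by (subst lborel_affine[OF c, of 0])
     (simp add: nn_integral_density nn_integral_distr nn_integral_cmult)

lemma nn_integral_scale':
  fixes f :: "'a::euclidean_space \<Rightarrow> ennreal" and c :: real
  assumes f[measurable]: "f \<in> borel_measurable borel" and c: "c \<noteq> 0"
  shows "(\<integral>\<^sup>+x. f (c *\<^sub>R x) \<partial>lborel) = ennreal (1 / \<bar>c\<bar>^DIM('a)) * (\<integral>\<^sup>+x. f x \<partial>lborel)"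
proof -
  have "ennreal (1 / \<bar>c\<bar>^DIM('a)) * (\<integral>\<^sup>+x. f x \<partial>lborel)
      = ennreal (1 / \<bar>c\<bar>^DIM('a)) * ennreal (\<bar>c\<bar>^DIM('a)) * (\<integral>\<^sup>+x. f (c *\<^sub>R x) \<partial>lborel)"
    by (subst nn_integral_scale[OF f c]) (simp add: mult.assoc)
  also have "ennreal (1 / \<bar>c\<bar>^DIM('a)) * ennreal (\<bar>c\<bar>^DIM('a)) = 1"
    using c by (simp add: ennreal_mult[symmetric])
  finally show ?thesis by simp
qed

lemma integrable_scale:
  fixes f :: "'a::euclidean_space \<Rightarrow> real" and c :: real
  assumes f: "integrable lborel f" and c: "c \<noteq> 0"
  shows "integrable lborel (\<lambda>x. f (c *\<^sub>R x))"
proof -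
  have [measurable]: "f \<in> borel_measurable borel" using f by (simp add: borel_measurable_integrable)
  have "(\<integral>\<^sup>+x. ennreal (norm (f (c *\<^sub>R x))) \<partial>lborel) = ennreal (1 / \<bar>c\<bar>^DIM('a)) * (\<integral>\<^sup>+x. ennreal (norm (f x)) \<partial>lborel)"
    using nn_integral_scale'[of "\<lambda>x. ennreal (norm (f x))" c] c by simp
  also have "\<dots> < \<infinity>" using f unfolding integrable_iff_bounded by (simp add: ennreal_mult_less_top)
  finally show ?thesis unfolding integrable_iff_bounded by simp
qed

lemma integrable_scale_iff:
  fixes f :: "'a::euclidean_space \<Rightarrow> real" and c :: real
  assumes c: "c \<noteq> 0"
  shows "integrable lborel (\<lambda>x. f (c *\<^sub>R x)) \<longleftrightarrow> integrable lborel f"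
  using integrable_scale[of f c] integrable_scale[of "\<lambda>x. f (c *\<^sub>R x)" "1/c"] c by auto

lemma integral_scale:
  fixes f :: "'a::euclidean_space \<Rightarrow> real" and c :: real
  assumes c: "c \<noteq> 0"
  shows "(\<integral>x. f (c *\<^sub>R x) \<partial>lborel) = (\<integral>x. f x \<partial>lborel) / \<bar>c\<bar>^DIM('a)"
proof cases
  assume f: "integrable lborel f"
  have [measurable]: "f \<in> borel_measurable borel" using f by (simp add: borel_measurable_integrable)
  have "(\<integral>x. f x \<partial>lborel) = \<bar>c\<bar>^DIM('a) * (\<integral>x. f (c *\<^sub>R x) \<partial>lborel)"
    using c f integrable_scale[OF f c]
    by (subst lborel_affine[OF c, of 0]) (simp add: integral_density integral_distr)
  then show ?thesis using c by simp
next
  assume "\<not> integrable lborel f" with c show ?thesis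
    by (simp add: integrable_scale_iff not_integrable_integral_eq)
qed

definition sc :: "real \<Rightarrow> real \<Rightarrow> ('a::euclidean_space \<Rightarrow> real) \<Rightarrow> 'a \<Rightarrow> real" where
  "sc l t u x = l * u (t *\<^sub>R x)"

lemma sc_meas: assumes "u \<in> borel_measurable lborel" shows "sc l t u \<in> borel_measurable lborel"
proof -
  have [measurable]: "u \<in> borel_measurable borel" using assms by simp
  show ?thesis unfolding sc_def[abs_def] by measurable
qed

lemma L2_sc:
  fixes u :: "'a::euclidean_space \<Rightarrow> real"
  assumes u: "u \<in> borel_measurable lborel" and t: "0 < t"
  shows "L2_sq (sc l t u) = ennreal (l^2 / t^DIM('a)) * L2_sq u"
proof -
  have [measurable]: "u \<in> borel_measurable borel" using u by simp
  have "L2_sq (sc l t u) = (\<integral>\<^sup>+x. ennreal (l^2) * ennreal ((u (t *\<^sub>R x))\<^sup>2) \<partial>lborel)"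
    unfolding L2_sq_def sc_def by (intro nn_integral_cong) (simp add: ennreal_mult[symmetric] power_mult_distrib)
  also have "\<dots> = ennreal (l^2) * (\<integral>\<^sup>+x. ennreal ((u (t *\<^sub>R x))\<^sup>2) \<partial>lborel)"
    by (rule nn_integral_cmult) measurable
  also have "(\<integral>\<^sup>+x. ennreal ((u (t *\<^sub>R x))\<^sup>2) \<partial>lborel) = ennreal (1 / \<bar>t\<bar>^DIM('a)) * L2_sq u"
    unfolding L2_sq_def using t by (intro nn_integral_scale'[where f="\<lambda>x. ennreal ((u x)\<^sup>2)"]) auto
  finally show ?thesis using t by (simp add: ennreal_mult[symmetric] mult.assoc[symmetric])
qed

lemma gag_sc:
  fixes u :: "'a::euclidean_space \<Rightarrow> real"
  assumes u: "u \<in> borel_measurable lborel" and t: "0 < t"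
  shows "gag_sq s (sc l t u) = ennreal (l^2 * t powr (real DIM('a) + 2 * s) / t^(2 * DIM('a))) * gag_sq s u"
proof -
  have [measurable]: "u \<in> borel_measurable borel" using u by simp
  define r where "r = real DIM('a) + 2 * s"
  define F where "F q = ennreal ((u (fst q) - u (snd q))\<^sup>2 / norm (fst q - snd q) powr r)" for q :: "'a \<times> 'a"
  have "F \<in> borel_measurable (borel \<Otimes>\<^sub>M borel)" unfolding F_def by measurable
  then have Fm[measurable]: "F \<in> borel_measurable borel" by (simp add: borel_prod)
  have eq: "ennreal ((sc l t u (fst p) - sc l t u (snd p))\<^sup>2 / norm (fst p - snd p) powr r)
      = ennreal (l^2 * t powr r) * F (t *\<^sub>R p)" for p :: "'a \<times> 'a"
  proof -
    have n: "norm (fst p - snd p) = norm (t *\<^sub>R fst p - t *\<^sub>R snd p) / t"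
      using t by (simp add: scaleR_diff_right[symmetric])
    define a where "a = u (t *\<^sub>R fst p)"
    define b where "b = u (t *\<^sub>R snd p)"
    define N where "N = norm (t *\<^sub>R fst p - t *\<^sub>R snd p)"
    have 1: "(l * a - l * b)\<^sup>2 = l^2 * (a - b)\<^sup>2"
      by (simp add: power_mult_distrib right_diff_distrib[symmetric])
    have 2: "(N / t) powr r = N powr r / t powr r"
      using t by (simp add: powr_divide N_def)
    have "(sc l t u (fst p) - sc l t u (snd p))\<^sup>2 / norm (fst p - snd p) powr r
        = l^2 * (a - b)\<^sup>2 / (N powr r / t powr r)"
      unfolding n sc_def a_def[symmetric] b_def[symmetric] N_def[symmetric] 1 2 ..
    also have "\<dots> = l^2 * t powr r * ((a - b)\<^sup>2 / N powr r)"
      by (simp only: divide_divide_eq_right times_divide_eq_right mult_ac)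
    finally have "(sc l t u (fst p) - sc l t u (snd p))\<^sup>2 / norm (fst p - snd p) powr r
        = l^2 * t powr r * ((u (t *\<^sub>R fst p) - u (t *\<^sub>R snd p))\<^sup>2 / norm (t *\<^sub>R fst p - t *\<^sub>R snd p) powr r)"
      unfolding a_def b_def N_def .
    then show ?thesis unfolding F_def using t
      by (simp add: ennreal_mult[symmetric])
  qed
  have "gag_sq s (sc l t u) = (\<integral>\<^sup>+p. ennreal (l^2 * t powr r) * F (t *\<^sub>R p) \<partial>lborel)"
    unfolding gag_sq_def lborel_prod r_def[symmetric] using eq by simp
  also have "\<dots> = ennreal (l^2 * t powr r) * (\<integral>\<^sup>+p. F (t *\<^sub>R p) \<partial>lborel)"
    by (rule nn_integral_cmult) measurable
  also have "(\<integral>\<^sup>+p. F (t *\<^sub>R p) \<partial>(lborel :: ('a \<times> 'a) measure)) = ennreal (1 / \<bar>t\<bar>^(2 * DIM('a))) * (\<integral>\<^sup>+p. F p \<partial>lborel)"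
    using nn_integral_scale'[OF Fm, of t] t by (simp add: mult_2)
  also have "(\<integral>\<^sup>+p. F p \<partial>lborel) = gag_sq s u"
    unfolding gag_sq_def lborel_prod F_def r_def ..
  finally show ?thesis using t
    by (simp add: ennreal_mult[symmetric] mult.assoc[symmetric] r_def)
qed


context gset begin

lemma G_cont: "continuous_on UNIV (Gprim g)"
  using Gprim_deriv by (meson DERIV_isCont continuous_at_imp_continuous_on)

lemma Gt_cont: "continuous_on UNIV (Gtil g)"
  using Gtil_deriv by (meson DERIV_isCont continuous_at_imp_continuous_on)

lemma G_meas: "Gprim g \<in> borel_measurable borel"
  by (rule borel_measurable_continuous_onI[OF G_cont])

lemma Gt_meas: "Gtil g \<in> borel_measurable borel"
  by (rule borel_measurable_continuous_onI[OF Gt_cont])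

lemma comp_meas:
  fixes u :: "'a::euclidean_space \<Rightarrow> real"
  assumes "u \<in> borel_measurable lborel"
  shows "(\<lambda>x. Gprim g (l * u x)) \<in> borel_measurable lborel"
    "(\<lambda>x. Gtil g (l * u x)) \<in> borel_measurable lborel"
proof -
  have [measurable]: "u \<in> borel_measurable borel" "Gprim g \<in> borel_measurable borel"
    "Gtil g \<in> borel_measurable borel" using assms G_meas Gt_meas by auto
  show "(\<lambda>x. Gprim g (l * u x)) \<in> borel_measurable lborel" by measurable
  show "(\<lambda>x. Gtil g (l * u x)) \<in> borel_measurable lborel" by measurable
qed

context
  fixes u :: "'a::euclidean_space \<Rightarrow> real"
  assumes um: "u \<in> borel_measurable lborel"
    and ui: "integrable lborel (\<lambda>x. Gtil g (u x))"
begin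

lemma int_Gt: assumes "0 < l" shows "integrable lborel (\<lambda>x. Gtil g (l * u x))"
proof (rule Bochner_Integration.integrable_bound[where f="\<lambda>x. (\<beta> - 2) / (\<alpha> - 2) * (l powr \<alpha> + l powr \<beta>) * Gtil g (u x)"])
  show "integrable lborel (\<lambda>x. (\<beta> - 2) / (\<alpha> - 2) * (l powr \<alpha> + l powr \<beta>) * Gtil g (u x))"
    using ui by simp
  show "(\<lambda>x. Gtil g (l * u x)) \<in> borel_measurable lborel" by (rule comp_meas[OF um])
  show "AE x in lborel. norm (Gtil g (l * u x)) \<le> norm ((\<beta> - 2) / (\<alpha> - 2) * (l powr \<alpha> + l powr \<beta>) * Gtil g (u x))"
  proof (intro AE_I2)
    fix x
    have "0 \<le> Gtil g (l * u x)" by (rule Gt_nonneg)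
    moreover have "Gtil g (l * u x) \<le> (\<beta> - 2) / (\<alpha> - 2) * (l powr \<alpha> + l powr \<beta>) * Gtil g (u x)"
      by (rule Gt_bound[OF assms])
    ultimately show "norm (Gtil g (l * u x)) \<le> norm ((\<beta> - 2) / (\<alpha> - 2) * (l powr \<alpha> + l powr \<beta>) * Gtil g (u x))"
      unfolding real_norm_def by arith
  qed
qed

lemma int_G: assumes "0 < l" shows "integrable lborel (\<lambda>x. Gprim g (l * u x))"
proof (rule Bochner_Integration.integrable_bound[where f="\<lambda>x. 2 / (\<alpha> - 2) * Gtil g (l * u x)"])
  show "integrable lborel (\<lambda>x. 2 / (\<alpha> - 2) * Gtil g (l * u x))"
    using int_Gt[OF assms] by simp
  show "(\<lambda>x. Gprim g (l * u x)) \<in> borel_measurable lborel" by (rule comp_meas[OF um])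
  show "AE x in lborel. norm (Gprim g (l * u x)) \<le> norm (2 / (\<alpha> - 2) * Gtil g (l * u x))"
  proof (intro AE_I2)
    fix x
    have "0 \<le> Gprim g (l * u x)" by (rule G_nonneg)
    moreover have "Gprim g (l * u x) \<le> 2 / (\<alpha> - 2) * Gtil g (l * u x)" by (rule G_le_Gt)
    ultimately show "norm (Gprim g (l * u x)) \<le> norm (2 / (\<alpha> - 2) * Gtil g (l * u x))"
      unfolding real_norm_def by arith
  qed
qed

lemma int_G1: "integrable lborel (\<lambda>x. Gprim g (u x))"
  using int_G[of 1] by simp

lemma Psi_cont: "continuous_on {0<..} (\<lambda>l. \<integral>x. Gtil g (l * u x) \<partial>lborel)"
proof (rule continuous_on_sequentiallyI)
  fix X :: "nat \<Rightarrow> real" and a :: real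
  assume X: "\<forall>n. X n \<in> {0<..}" and a: "a \<in> {0<..}" and lim: "X \<longlonglongrightarrow> a"
  obtain B where B: "\<And>n. norm (X n) \<le> B" using convergent_imp_Bseq[of X] lim unfolding Bseq_def convergent_def by auto
  define C where "C = (\<beta> - 2) / (\<alpha> - 2) * (B powr \<alpha> + B powr \<beta>)"
  show "(\<lambda>n. \<integral>x. Gtil g (X n * u x) \<partial>lborel) \<longlonglongrightarrow> (\<integral>x. Gtil g (a * u x) \<partial>lborel)"
  proof (rule integral_dominated_convergence[where w="\<lambda>x. C * Gtil g (u x)"])
    show "(\<lambda>x. Gtil g (a * u x)) \<in> borel_measurable lborel" by (rule comp_meas[OF um])
    show "\<And>n. (\<lambda>x. Gtil g (X n * u x)) \<in> borel_measurable lborel" by (rule comp_meas[OF um])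
    show "integrable lborel (\<lambda>x. C * Gtil g (u x))" using ui by simp
    show "AE x in lborel. (\<lambda>n. Gtil g (X n * u x)) \<longlonglongrightarrow> Gtil g (a * u x)"
    proof (intro AE_I2)
      fix x
      have "(\<lambda>n. X n * u x) \<longlonglongrightarrow> a * u x" by (intro tendsto_intros lim)
      moreover have "isCont (Gtil g) (a * u x)" using Gt_cont continuous_on_eq_continuous_at by blast
      ultimately show "(\<lambda>n. Gtil g (X n * u x)) \<longlonglongrightarrow> Gtil g (a * u x)"
        using isCont_tendsto_compose by blast
    qed
    show "AE x in lborel. norm (Gtil g (X n * u x)) \<le> C * Gtil g (u x)" for n
    proof (intro AE_I2)
      fix x
      have Xn: "0 < X n" "X n \<le> B" using X B[of n] by auto
      have "0 \<le> Gtil g (X n * u x)" by (rule Gt_nonneg)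
      moreover have "Gtil g (X n * u x) \<le> (\<beta> - 2) / (\<alpha> - 2) * (X n powr \<alpha> + X n powr \<beta>) * Gtil g (u x)"
        by (rule Gt_bound) (use Xn in auto)
      moreover have "(\<beta> - 2) / (\<alpha> - 2) * (X n powr \<alpha> + X n powr \<beta>) * Gtil g (u x) \<le> C * Gtil g (u x)"
        unfolding C_def using Xn a2 ab Gt_nonneg[of "u x"]
        by (intro mult_right_mono mult_left_mono add_mono powr_mono2) auto
      ultimately show "norm (Gtil g (X n * u x)) \<le> C * Gtil g (u x)" by simp
    qed
  qed
qed

lemma Psi_ge1: assumes "1 \<le> l"
  shows "(\<integral>x. Gtil g (l * u x) \<partial>lborel) \<ge> l powr \<alpha> * (\<integral>x. Gtil g (u x) \<partial>lborel)"
proof -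
  have "(\<integral>x. l powr \<alpha> * Gtil g (u x) \<partial>lborel) \<le> (\<integral>x. Gtil g (l * u x) \<partial>lborel)"
    using assms by (intro integral_mono int_Gt Gt_ge1 integrable_mult_right ui) auto
  then show ?thesis by simp
qed

lemma Psi_le1: assumes "0 < l" "l \<le> 1"
  shows "(\<integral>x. Gtil g (l * u x) \<partial>lborel) \<le> l powr \<alpha> * (\<integral>x. Gtil g (u x) \<partial>lborel)"
proof -
  have "(\<integral>x. Gtil g (l * u x) \<partial>lborel) \<le> (\<integral>x. l powr \<alpha> * Gtil g (u x) \<partial>lborel)"
    using assms by (intro integral_mono int_Gt Gt_le2 integrable_mult_right ui) auto
  then show ?thesis by simp
qed

lemma Phi_scale: assumes "0 < l" "0 < m"
  shows "(\<integral>x. Gprim g ((m * l) * u x) \<partial>lborel) \<ge> min (m powr 2) (m powr \<beta>) * (\<integral>x. Gprim g (l * u x) \<partial>lborel)"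
proof -
  have "(\<integral>x. min (m powr 2) (m powr \<beta>) * Gprim g (l * u x) \<partial>lborel) \<le> (\<integral>x. Gprim g ((m * l) * u x) \<partial>lborel)"
  proof (intro integral_mono int_G integrable_mult_right)
    fix x
    show "min (m powr 2) (m powr \<beta>) * Gprim g (l * u x) \<le> Gprim g ((m * l) * u x)"
      using G_scale_ge[OF assms(2), of "l * u x"] by (simp add: mult.assoc)
  qed (use assms in auto)
  then show ?thesis by simp
qed

lemma Phi_fiber:
  fixes D t :: real
  assumes t: "0 < t" and D: "0 < D"
  shows "t powr (-D) * (\<integral>x. Gprim g (t powr (D/2) * u x) \<partial>lborel) - (\<integral>x. Gprim g (u x) \<partial>lborel)
     \<ge> D * (\<integral>x. Gtil g (u x) \<partial>lborel) * ((t powr (D * (\<alpha> - 2) / 2) - 1) / (D * (\<alpha> - 2) / 2))"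
proof -
  define c0 where "c0 = (t powr (D * (\<alpha> - 2) / 2) - 1) / (D * (\<alpha> - 2) / 2)"
  have i1: "integrable lborel (\<lambda>x. t powr (-D) * Gprim g (t powr (D/2) * u x) - Gprim g (u x))"
    using t by (intro Bochner_Integration.integrable_diff integrable_mult_right int_G int_G1) auto
  have i2: "integrable lborel (\<lambda>x. D * Gtil g (u x) * c0)"
    using ui by simp
  have "(\<integral>x. D * Gtil g (u x) * c0 \<partial>lborel)
      \<le> (\<integral>x. t powr (-D) * Gprim g (t powr (D/2) * u x) - Gprim g (u x) \<partial>lborel)"
  proof (rule integral_mono[OF i2 i1])
    fix x
    show "D * Gtil g (u x) * c0 \<le> t powr (-D) * Gprim g (t powr (D/2) * u x) - Gprim g (u x)"
      using fiber_pt[OF t D, of "u x"] unfolding c0_def .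
  qed
  also have "\<dots> = t powr (-D) * (\<integral>x. Gprim g (t powr (D/2) * u x) \<partial>lborel) - (\<integral>x. Gprim g (u x) \<partial>lborel)"
    using t by (subst Bochner_Integration.integral_diff) (auto intro!: integrable_mult_right int_G int_G1)
  finally show ?thesis unfolding c0_def[symmetric] by simp
qed

end
end


lemma fiber_zero:
  fixes D s1 s2 \<alpha> A1 A2 \<Psi>1 \<mu> :: real and \<Psi> :: "real \<Rightarrow> real"
  assumes D: "0 < D" and s: "0 < s1" "s1 \<le> s2" and A: "0 \<le> A1" "0 \<le> A2"
    and K: "0 < s1 * A1 + s2 * A2" and KP: "D * \<Psi>1 = s1 * A1 + s2 * A2"
    and abig: "2 + 4 * s2 / D < \<alpha>" and \<mu>: "0 < \<mu>"
    and cont: "continuous_on {0<..} \<Psi>"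
    and ge: "\<And>l. 1 \<le> l \<Longrightarrow> \<Psi> l \<ge> l powr \<alpha> * \<Psi>1"
    and le: "\<And>l. 0 < l \<Longrightarrow> l \<le> 1 \<Longrightarrow> \<Psi> l \<le> l powr \<alpha> * \<Psi>1"
  shows "\<exists>t>0. \<mu>^2 * (s1 * t powr (2 * s1) * A1 + s2 * t powr (2 * s2) * A2)
              - D * (t powr (-D) * \<Psi> (\<mu> * t powr (D/2))) = 0"
proof -
  define K where "K = s1 * A1 + s2 * A2"
  define \<gamma> where "\<gamma> = D * \<alpha> / 2 - D - 2 * s2"
  have \<gamma>: "0 < \<gamma>"
  proof -
    have "4 * s2 / D * D < (\<alpha> - 2) * D" using abig D by (intro mult_strict_right_mono) auto
    then have "4 * s2 < (\<alpha> - 2) * D" using D by simp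
    then show ?thesis unfolding \<gamma>_def by (simp add: algebra_simps)
  qed
  have s2: "0 < s2" using s by simp
  have P1: "\<Psi>1 > 0" using KP K D by (metis mult_pos_pos zero_less_mult_pos)
  define f where "f t = \<mu>^2 * (s1 * t powr (2 * s1) * A1 + s2 * t powr (2 * s2) * A2)
              - D * (t powr (-D) * \<Psi> (\<mu> * t powr (D/2)))" for t
  have mu2: "\<mu>^2 = \<mu> powr 2" using \<mu> by (simp add: powr_realpow)
  have key: "t powr (-D) * (\<mu> * t powr (D/2)) powr \<alpha> = \<mu> powr \<alpha> * t powr (2 * s2) * t powr \<gamma>" if t: "0 < t" for t
  proof -
    have "(\<mu> * t powr (D/2)) powr \<alpha> = \<mu> powr \<alpha> * t powr (D * \<alpha> / 2)"
      using t \<mu> by (simp add: powr_mult powr_powr)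
    moreover have "t powr (-D) * t powr (D * \<alpha> / 2) = t powr (2 * s2) * t powr \<gamma>"
      unfolding powr_add[symmetric] \<gamma>_def by (simp add: algebra_simps)
    ultimately show ?thesis by (simp add: mult_ac)
  qed
  have lo: "f t \<ge> 0" if t: "0 < t" "t \<le> 1" "\<mu> * t powr (D/2) \<le> 1" "t powr \<gamma> \<le> \<mu> powr (2 - \<alpha>)" for t
  proof -
    define l where "l = \<mu> * t powr (D/2)"
    have l: "0 < l" "l \<le> 1" using t \<mu> by (auto simp: l_def)
    have "D * (t powr (-D) * \<Psi> l) \<le> D * (t powr (-D) * (l powr \<alpha> * \<Psi>1))"
      using le[OF l] D t by (intro mult_left_mono) auto
    also have "\<dots> = \<mu> powr \<alpha> * t powr \<gamma> * t powr (2 * s2) * K"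
      using key[OF t(1)] KP unfolding l_def K_def by (simp add: mult_ac)
    also have "\<dots> \<le> \<mu> powr 2 * t powr (2 * s2) * K"
    proof -
      have "\<mu> powr \<alpha> * t powr \<gamma> \<le> \<mu> powr \<alpha> * \<mu> powr (2 - \<alpha>)"
        using t by (intro mult_left_mono) auto
      also have "\<dots> = \<mu> powr 2" by (simp add: powr_add[symmetric])
      finally show ?thesis using K unfolding K_def by (intro mult_right_mono) auto
    qed
    also have "\<dots> \<le> \<mu> powr 2 * (s1 * t powr (2 * s1) * A1 + s2 * t powr (2 * s2) * A2)"
    proof -
      have "t powr (2 * s2) \<le> t powr (2 * s1)" using t s by (intro powr_mono') auto
      then have "s1 * t powr (2 * s2) * A1 \<le> s1 * t powr (2 * s1) * A1"
        using s A by (intro mult_right_mono mult_left_mono) auto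
      then have "t powr (2 * s2) * K \<le> s1 * t powr (2 * s1) * A1 + s2 * t powr (2 * s2) * A2"
        unfolding K_def by (simp add: algebra_simps)
      then show ?thesis by (metis mult.assoc mult_left_mono powr_ge_zero)
    qed
    finally show ?thesis unfolding f_def mu2 l_def by simp
  qed
  have hi: "f t \<le> 0" if t: "1 \<le> t" "1 \<le> \<mu> * t powr (D/2)" "\<mu> powr (2 - \<alpha>) \<le> t powr \<gamma>" for t
  proof -
    have t0: "0 < t" using t by simp
    define l where "l = \<mu> * t powr (D/2)"
    have "D * (t powr (-D) * (l powr \<alpha> * \<Psi>1)) \<le> D * (t powr (-D) * \<Psi> l)"
      using ge[of l] D t unfolding l_def by (intro mult_left_mono) auto
    moreover have "D * (t powr (-D) * (l powr \<alpha> * \<Psi>1)) = \<mu> powr \<alpha> * t powr \<gamma> * t powr (2 * s2) * K"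
      using key[OF t0] KP unfolding l_def K_def by (simp add: mult_ac)
    moreover have "\<mu> powr 2 * t powr (2 * s2) * K \<le> \<mu> powr \<alpha> * t powr \<gamma> * t powr (2 * s2) * K"
    proof -
      have "\<mu> powr \<alpha> * \<mu> powr (2 - \<alpha>) \<le> \<mu> powr \<alpha> * t powr \<gamma>"
        using t by (intro mult_left_mono) auto
      moreover have "\<mu> powr \<alpha> * \<mu> powr (2 - \<alpha>) = \<mu> powr 2" by (simp add: powr_add[symmetric])
      ultimately show ?thesis using K unfolding K_def by (intro mult_right_mono) auto
    qed
    moreover have "\<mu> powr 2 * (s1 * t powr (2 * s1) * A1 + s2 * t powr (2 * s2) * A2) \<le> \<mu> powr 2 * t powr (2 * s2) * K"
    proof -
      have "t powr (2 * s1) \<le> t powr (2 * s2)" using t s by (intro powr_mono) auto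
      then have "s1 * t powr (2 * s1) * A1 \<le> s1 * t powr (2 * s2) * A1"
        using s A by (intro mult_right_mono mult_left_mono) auto
      then have "s1 * t powr (2 * s1) * A1 + s2 * t powr (2 * s2) * A2 \<le> t powr (2 * s2) * K"
        unfolding K_def by (simp add: algebra_simps)
      then show ?thesis by (metis mult.assoc mult_left_mono powr_ge_zero)
    qed
    ultimately show ?thesis unfolding f_def mu2 l_def by linarith
  qed
  define a where "a = min 1 (min (\<mu> powr (-2/D)) (\<mu> powr ((2 - \<alpha>)/\<gamma>)))"
  define b where "b = max 1 (max (\<mu> powr (-2/D)) (\<mu> powr ((2 - \<alpha>)/\<gamma>)))"
  have a0: "0 < a" using \<mu> by (simp add: a_def)
  have ab: "a \<le> b" unfolding a_def b_def by linarith
  have "f a \<ge> 0"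
  proof (rule lo)
    show "0 < a" by (rule a0)
    show "a \<le> 1" by (simp add: a_def)
    have "a powr (D/2) \<le> (\<mu> powr (-2/D)) powr (D/2)"
      using a0 D by (intro powr_mono2) (auto simp: a_def)
    also have "\<dots> = \<mu> powr (-1)" using D by (simp add: powr_powr)
    finally have "\<mu> * a powr (D/2) \<le> \<mu> * \<mu> powr (-1)" using \<mu> by (intro mult_left_mono) auto
    also have "\<dots> = 1" using \<mu> by (simp add: powr_minus)
    finally show "\<mu> * a powr (D/2) \<le> 1" .
    have "a powr \<gamma> \<le> (\<mu> powr ((2 - \<alpha>)/\<gamma>)) powr \<gamma>"
      using a0 \<gamma> by (intro powr_mono2) (auto simp: a_def)
    also have "\<dots> = \<mu> powr (2 - \<alpha>)" using \<gamma> by (simp add: powr_powr)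
    finally show "a powr \<gamma> \<le> \<mu> powr (2 - \<alpha>)" .
  qed
  moreover have "f b \<le> 0"
  proof (rule hi)
    show "1 \<le> b" by (simp add: b_def)
    have "\<mu> powr (-2/D) \<le> b" by (simp add: b_def)
    then have "(\<mu> powr (-2/D)) powr (D/2) \<le> b powr (D/2)"
      using D by (intro powr_mono2) auto
    moreover have "(\<mu> powr (-2/D)) powr (D/2) = \<mu> powr (-1)" using D by (simp add: powr_powr)
    ultimately have "\<mu> * \<mu> powr (-1) \<le> \<mu> * b powr (D/2)" using \<mu> by (intro mult_left_mono) auto
    moreover have "\<mu> * \<mu> powr (-1) = 1" using \<mu> by (simp add: powr_minus)
    ultimately show "1 \<le> \<mu> * b powr (D/2)" by simp
    have "\<mu> powr ((2 - \<alpha>)/\<gamma>) \<le> b" by (simp add: b_def)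
    then have "(\<mu> powr ((2 - \<alpha>)/\<gamma>)) powr \<gamma> \<le> b powr \<gamma>"
      using \<gamma> by (intro powr_mono2) auto
    moreover have "(\<mu> powr ((2 - \<alpha>)/\<gamma>)) powr \<gamma> = \<mu> powr (2 - \<alpha>)" using \<gamma> by (simp add: powr_powr)
    ultimately show "\<mu> powr (2 - \<alpha>) \<le> b powr \<gamma>" by simp
  qed
  moreover have "continuous_on {a..b} f"
  proof -
    have sub: "{a..b} \<subseteq> {0<..}" using a0 by auto
    have c1: "continuous_on {a..b} (\<lambda>t. \<mu> * t powr (D/2))"
      using sub by (intro continuous_intros) auto
    have c2: "continuous_on {a..b} (\<lambda>t. \<Psi> (\<mu> * t powr (D/2)))"
    proof (rule continuous_on_compose2[OF cont c1])
      show "(\<lambda>t. \<mu> * t powr (D/2)) ` {a..b} \<subseteq> {0<..}" using sub \<mu> by auto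
    qed
    show ?thesis unfolding f_def using sub
      by (intro continuous_intros c2) auto
  qed
  ultimately obtain t where "a \<le> t" "t \<le> b" "f t = 0"
    using IVT2'[of f b 0 a] ab by auto
  then show ?thesis using a0 unfolding f_def by (intro exI[of _ t]) auto
qed


lemma tpow: "0 < t \<Longrightarrow> t ^ DIM('a::euclidean_space) = t powr real DIM('a)"
  by (simp add: powr_realpow)

lemma gag_fib:
  fixes u :: "'a::euclidean_space \<Rightarrow> real"
  assumes u: "u \<in> borel_measurable lborel" and t: "0 < t"
  shows "gag_sq s (sc (\<mu> * t powr (real DIM('a) / 2)) t u) = ennreal (\<mu>^2 * t powr (2 * s)) * gag_sq s u"
proof -
  define D where "D = real DIM('a)"
  have "(\<mu> * t powr (D / 2))^2 * t powr (D + 2 * s) / t^(2 * DIM('a)) = \<mu>^2 * t powr (2 * s)"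
  proof -
    have 1: "(t powr (D / 2))^2 = t powr D" using t by (simp add: power2_eq_square powr_add[symmetric])
    have 2: "t^(2 * DIM('a)) = t powr D * t powr D" using t
      by (simp add: power_mult powr_realpow[symmetric] D_def power2_eq_square powr_mult)
    have 3: "t powr (D + 2 * s) = t powr D * t powr (2 * s)" by (simp add: powr_add)
    show ?thesis unfolding power_mult_distrib 1 2 3 using t by simp
  qed
  then show ?thesis using gag_sc[OF u t, of s "\<mu> * t powr (D / 2)"] by (simp add: D_def)
qed

lemma L2_fib:
  fixes u :: "'a::euclidean_space \<Rightarrow> real"
  assumes u: "u \<in> borel_measurable lborel" and t: "0 < t"
  shows "L2_sq (sc (\<mu> * t powr (real DIM('a) / 2)) t u) = ennreal (\<mu>^2) * L2_sq u"
proof -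
  define D where "D = real DIM('a)"
  have "(\<mu> * t powr (D / 2))^2 / t^DIM('a) = \<mu>^2"
  proof -
    have 1: "(t powr (D / 2))^2 = t powr D" using t by (simp add: power2_eq_square powr_add[symmetric])
    have 2: "t^DIM('a) = t powr D" using t by (simp add: powr_realpow D_def)
    show ?thesis unfolding power_mult_distrib 1 2 using t by simp
  qed
  then show ?thesis using L2_sc[OF u t, of "\<mu> * t powr (D / 2)"] by (simp add: D_def)
qed

lemma int_fib:
  fixes u :: "'a::euclidean_space \<Rightarrow> real" and F :: "real \<Rightarrow> real"
  assumes t: "0 < t"
  shows "(\<integral>x. F (sc l t u x) \<partial>lborel) = t powr (- real DIM('a)) * (\<integral>x. F (l * u x) \<partial>lborel)"
proof -
  have "(\<integral>x. F (sc l t u x) \<partial>lborel) = (\<integral>x. (\<lambda>y. F (l * u y)) (t *\<^sub>R x) \<partial>lborel)"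
    by (simp add: sc_def)
  also have "\<dots> = (\<integral>x. F (l * u x) \<partial>lborel) / \<bar>t\<bar>^DIM('a)"
    using t by (intro integral_scale) auto
  also have "\<dots> = t powr (- real DIM('a)) * (\<integral>x. F (l * u x) \<partial>lborel)"
    using t by (simp add: powr_minus powr_realpow divide_inverse mult.commute)
  finally show ?thesis .
qed

context gset begin

lemma I_lower:
  fixes w :: "'a::euclidean_space \<Rightarrow> real"
  assumes s: "0 < s1" "s1 < s2" and abig: "2 + 4 * s2 / real DIM('a) < \<alpha>"
    and w: "w \<in> Pmfd s1 s2 g a"
  shows "Ifun s1 s2 g w \<ge> (1/2 - 2 * s2 / (real DIM('a) * (\<alpha> - 2)))
          * (enn2real (gag_sq s1 w) + enn2real (gag_sq s2 w))"
proof -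
  define D where "D = real DIM('a)"
  define A1 where "A1 = enn2real (gag_sq s1 w)"
  define A2 where "A2 = enn2real (gag_sq s2 w)"
  define \<kappa> where "\<kappa> = 2 / (D * (\<alpha> - 2))"
  have D: "0 < D" by (simp add: D_def)
  have A: "0 \<le> A1" "0 \<le> A2" by (auto simp: A1_def A2_def)
  have wm: "w \<in> borel_measurable lborel" using w by (simp add: Pmfd_def Sa_def Hs1s2_def)
  have P: "s1 * A1 + s2 * A2 - D * (\<integral>x. Gtil g (w x) \<partial>lborel) = 0"
    using w by (simp add: Pmfd_def Pinf_def A1_def A2_def D_def)
  have I: "Ifun s1 s2 g w = A1 / 2 + A2 / 2 - (\<integral>x. Gprim g (w x) \<partial>lborel)"
    by (simp add: Ifun_def A1_def A2_def)
  have \<kappa>: "0 < \<kappa>" "\<kappa> * D = 2 / (\<alpha> - 2)" using D a2 by (auto simp: \<kappa>_def)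
  show ?thesis
  proof (cases "integrable lborel (\<lambda>x. Gtil g (w x))")
    case True
    have "(\<integral>x. Gprim g (w x) \<partial>lborel) \<le> (\<integral>x. 2 / (\<alpha> - 2) * Gtil g (w x) \<partial>lborel)"
      by (intro integral_mono int_G1[OF wm True] integrable_mult_right True G_le_Gt)
    then have "(\<integral>x. Gprim g (w x) \<partial>lborel) \<le> \<kappa> * (D * (\<integral>x. Gtil g (w x) \<partial>lborel))"
      using \<kappa> by (simp add: mult.assoc[symmetric])
    also have "\<dots> = \<kappa> * (s1 * A1 + s2 * A2)" using P by simp
    finally have 1: "(\<integral>x. Gprim g (w x) \<partial>lborel) \<le> \<kappa> * s1 * A1 + \<kappa> * s2 * A2"
      by (simp add: algebra_simps)
    have "\<kappa> * s1 * A1 \<le> \<kappa> * s2 * A1" using s \<kappa> A by (intro mult_right_mono mult_left_mono) auto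
    with 1 I have "Ifun s1 s2 g w \<ge> (1/2 - \<kappa> * s2) * (A1 + A2)"
      by (simp add: algebra_simps)
    then show ?thesis by (simp add: \<kappa>_def D_def A1_def A2_def mult.assoc)
  next
    case False
    then have z: "(\<integral>x. Gtil g (w x) \<partial>lborel) = 0" by (rule not_integrable_integral_eq)
    have "s1 * A1 + s2 * A2 = 0" using P z by simp
    then have A0: "A1 = 0" "A2 = 0" using s A
      by (smt (verit) mult_nonneg_nonneg mult_pos_pos)+
    have "\<not> integrable lborel (\<lambda>x. Gprim g (w x))"
    proof
      assume "integrable lborel (\<lambda>x. Gprim g (w x))"
      then have "integrable lborel (\<lambda>x. Gtil g (w x))"
      proof (rule Bochner_Integration.integrable_bound[where f="\<lambda>x. (\<beta> - 2) / 2 * Gprim g (w x)", OF integrable_mult_right])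
        show "(\<lambda>x. Gtil g (w x)) \<in> borel_measurable lborel" using comp_meas(2)[OF wm, of 1] by simp
        show "AE x in lborel. norm (Gtil g (w x)) \<le> norm ((\<beta> - 2) / 2 * Gprim g (w x))"
        proof (intro AE_I2)
          fix x
          have "0 \<le> Gtil g (w x)" "Gtil g (w x) \<le> (\<beta> - 2) / 2 * Gprim g (w x)"
            by (rule Gt_nonneg, rule Gt_upper)
          then show "norm (Gtil g (w x)) \<le> norm ((\<beta> - 2) / 2 * Gprim g (w x))"
            unfolding real_norm_def by arith
        qed
      qed
      with False show False by simp
    qed
    then have "(\<integral>x. Gprim g (w x) \<partial>lborel) = 0" by (rule not_integrable_integral_eq)
    then show ?thesis using I A0 by (simp add: A1_def A2_def)
  qed
qed

end


lemma fib_facts: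
  fixes u :: "'a::euclidean_space \<Rightarrow> real" and \<mu> t a s1 s2 :: real
  assumes u: "u \<in> Hs1s2 s1 s2" and uL: "L2_sq u = ennreal a" and a: "0 \<le> a" and t: "0 < t"
  defines "w \<equiv> sc (\<mu> * t powr (real DIM('a) / 2)) t u"
  shows "w \<in> Hs1s2 s1 s2" "L2_sq w = ennreal (\<mu>^2 * a)"
    "enn2real (gag_sq s1 w) = \<mu>^2 * t powr (2 * s1) * enn2real (gag_sq s1 u)"
    "enn2real (gag_sq s2 w) = \<mu>^2 * t powr (2 * s2) * enn2real (gag_sq s2 u)"
    "\<And>F. (\<integral>x. F (w x) \<partial>lborel) = t powr (- real DIM('a)) * (\<integral>x. F ((\<mu> * t powr (real DIM('a) / 2)) * u x) \<partial>lborel)"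
proof -
  have um: "u \<in> borel_measurable lborel" and g1: "gag_sq s1 u < \<infinity>" and g2: "gag_sq s2 u < \<infinity>"
    using u by (auto simp: Hs1s2_def)
  show L: "L2_sq w = ennreal (\<mu>^2 * a)"
    unfolding w_def L2_fib[OF um t] uL using a by (simp add: ennreal_mult)
  have G1: "gag_sq s1 w = ennreal (\<mu>^2 * t powr (2 * s1)) * gag_sq s1 u"
    unfolding w_def by (rule gag_fib[OF um t])
  have G2: "gag_sq s2 w = ennreal (\<mu>^2 * t powr (2 * s2)) * gag_sq s2 u"
    unfolding w_def by (rule gag_fib[OF um t])
  show "w \<in> Hs1s2 s1 s2"
    unfolding Hs1s2_def using sc_meas[OF um] L G1 G2 g1 g2
    by (auto simp: w_def ennreal_mult_less_top)
  show "enn2real (gag_sq s1 w) = \<mu>^2 * t powr (2 * s1) * enn2real (gag_sq s1 u)"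
    unfolding G1 by (simp add: enn2real_mult)
  show "enn2real (gag_sq s2 w) = \<mu>^2 * t powr (2 * s2) * enn2real (gag_sq s2 u)"
    unfolding G2 by (simp add: enn2real_mult)
  show "\<And>F. (\<integral>x. F (w x) \<partial>lborel) = t powr (- real DIM('a)) * (\<integral>x. F ((\<mu> * t powr (real DIM('a) / 2)) * u x) \<partial>lborel)"
    unfolding w_def by (rule int_fib[OF t])
qed

context gset begin

lemma transfer:
  fixes u :: "'a::euclidean_space \<Rightarrow> real" and s1 s2 a \<mu> :: real
  assumes s: "0 < s1" "s1 < s2" and abig: "2 + 4 * s2 / real DIM('a) < \<alpha>"
    and u: "u \<in> Pmfd s1 s2 g a" and a: "0 < a" and \<mu>: "0 < \<mu>"
  defines "c \<equiv> 1/2 - 2 * s2 / (real DIM('a) * (\<alpha> - 2))"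
  shows "\<exists>w \<in> (Pmfd s1 s2 g (\<mu>^2 * a) :: ('a \<Rightarrow> real) set).
     (1 \<le> \<mu> \<longrightarrow> Ifun s1 s2 g w \<le> \<mu>^2 * Ifun s1 s2 g u) \<and>
     (\<mu> < 1 \<longrightarrow> Ifun s1 s2 g w * (1 - (1 - \<mu> powr (\<beta> - 2)) / (2 * c)) \<le> Ifun s1 s2 g u)"
proof -
  define D where "D = real DIM('a)"
  define A1 where "A1 = enn2real (gag_sq s1 u)"
  define A2 where "A2 = enn2real (gag_sq s2 u)"
  define K where "K = s1 * A1 + s2 * A2"
  define \<Psi>1 where "\<Psi>1 = (\<integral>x. Gtil g (u x) \<partial>lborel)"
  define \<Phi>1 where "\<Phi>1 = (\<integral>x. Gprim g (u x) \<partial>lborel)"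
  have D: "0 < D" by (simp add: D_def)
  have A: "0 \<le> A1" "0 \<le> A2" by (auto simp: A1_def A2_def)
  have uH: "u \<in> Hs1s2 s1 s2" and uL: "L2_sq u = ennreal a" and Pu: "Pinf s1 s2 g u = 0"
    using u by (auto simp: Pmfd_def Sa_def)
  have um: "u \<in> borel_measurable lborel" using uH by (simp add: Hs1s2_def)
  have KP: "D * \<Psi>1 = K" using Pu by (simp add: Pinf_def K_def A1_def A2_def D_def \<Psi>1_def)
  have Iu: "Ifun s1 s2 g u = A1 / 2 + A2 / 2 - \<Phi>1" by (simp add: Ifun_def A1_def A2_def \<Phi>1_def)
  have c: "0 < c"
  proof -
    have "4 * s2 / D * D < (\<alpha> - 2) * D" using abig D by (intro mult_strict_right_mono) (auto simp: D_def)
    then have "4 * s2 < (\<alpha> - 2) * D" using D by simp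
    then have "2 * s2 / (D * (\<alpha> - 2)) < 1/2" using D a2 by (simp add: field_simps)
    then show ?thesis by (simp add: c_def D_def)
  qed
  have Iu0: "Ifun s1 s2 g u \<ge> 0"
  proof -
    have "0 \<le> c * (A1 + A2)" using c A by simp
    also have "\<dots> \<le> Ifun s1 s2 g u" using I_lower[OF s abig u] by (simp add: c_def A1_def A2_def)
    finally show ?thesis .
  qed
  have Iw_lower: "Ifun s1 s2 g w \<ge> c * (enn2real (gag_sq s1 w) + enn2real (gag_sq s2 w))"
    if "w \<in> Pmfd s1 s2 g b" for w :: "'a \<Rightarrow> real" and b
    using I_lower[OF s abig that] by (simp add: c_def)
  show ?thesis
  proof (cases "K > 0")
    case Kpos: True
    have ui: "integrable lborel (\<lambda>x. Gtil g (u x))"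
    proof (rule ccontr)
      assume "\<not> ?thesis"
      then have "\<Psi>1 = 0" unfolding \<Psi>1_def by (rule not_integrable_integral_eq)
      with KP Kpos show False by simp
    qed
    define \<Psi> where "\<Psi> l = (\<integral>x. Gtil g (l * u x) \<partial>lborel)" for l
    define \<Phi> where "\<Phi> l = (\<integral>x. Gprim g (l * u x) \<partial>lborel)" for l
    have "\<exists>t>0. \<mu>^2 * (s1 * t powr (2 * s1) * A1 + s2 * t powr (2 * s2) * A2)
              - D * (t powr (-D) * \<Psi> (\<mu> * t powr (D/2))) = 0"
    proof (rule fiber_zero)
      show "0 < D" "0 < s1" "s1 \<le> s2" "0 \<le> A1" "0 \<le> A2" "0 < \<mu>" using D s A \<mu> by auto
      show "0 < s1 * A1 + s2 * A2" using Kpos by (simp add: K_def)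
      show "D * \<Psi>1 = s1 * A1 + s2 * A2" using KP by (simp add: K_def)
      show "2 + 4 * s2 / D < \<alpha>" using abig by (simp add: D_def)
      show "continuous_on {0<..} \<Psi>" unfolding \<Psi>_def by (rule Psi_cont[OF um ui])
      show "\<And>l. 1 \<le> l \<Longrightarrow> \<Psi> l \<ge> l powr \<alpha> * \<Psi>1"
        unfolding \<Psi>_def \<Psi>1_def by (rule Psi_ge1[OF um ui])
      show "\<And>l. 0 < l \<Longrightarrow> l \<le> 1 \<Longrightarrow> \<Psi> l \<le> l powr \<alpha> * \<Psi>1"
        unfolding \<Psi>_def \<Psi>1_def by (rule Psi_le1[OF um ui])
    qed
    then obtain t where t: "0 < t" and eq0: "\<mu>^2 * (s1 * t powr (2 * s1) * A1 + s2 * t powr (2 * s2) * A2)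
              - D * (t powr (-D) * \<Psi> (\<mu> * t powr (D/2))) = 0" by blast
    define w where "w = sc (\<mu> * t powr (real DIM('a) / 2)) t u"
    note ff = fib_facts[OF uH uL less_imp_le[OF a] t, where \<mu>=\<mu>, folded w_def]
    have wH: "w \<in> Hs1s2 s1 s2" and wL: "L2_sq w = ennreal (\<mu>^2 * a)" using ff a by auto
    have wA1: "enn2real (gag_sq s1 w) = \<mu>^2 * t powr (2 * s1) * A1"
      using ff(3) a by (simp add: A1_def)
    have wA2: "enn2real (gag_sq s2 w) = \<mu>^2 * t powr (2 * s2) * A2"
      using ff(4) a by (simp add: A2_def)
    have wPsi: "(\<integral>x. Gtil g (w x) \<partial>lborel) = t powr (-D) * \<Psi> (\<mu> * t powr (D/2))"
      using ff(5)[of "Gtil g"] a by (simp add: \<Psi>_def D_def)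
    have wPhi: "(\<integral>x. Gprim g (w x) \<partial>lborel) = t powr (-D) * \<Phi> (\<mu> * t powr (D/2))"
      using ff(5)[of "Gprim g"] a by (simp add: \<Phi>_def D_def)
    have Pw: "Pinf s1 s2 g w = 0"
      unfolding Pinf_def wA1 wA2 wPsi D_def[symmetric] using eq0 by (simp add: algebra_simps)
    have wP: "w \<in> Pmfd s1 s2 g (\<mu>^2 * a)" using wH wL Pw by (simp add: Pmfd_def Sa_def)
    define B where "B = t powr (2 * s1) * A1 + t powr (2 * s2) * A2"
    define \<Phi>t where "\<Phi>t = \<Phi> (t powr (D/2))"
    have Iw: "Ifun s1 s2 g w = \<mu>^2 * B / 2 - t powr (-D) * \<Phi> (\<mu> * t powr (D/2))"
      unfolding Ifun_def wA1 wA2 wPhi B_def by (simp add: algebra_simps)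
    have Iwl: "Ifun s1 s2 g w \<ge> c * (\<mu>^2 * B)"
      using Iw_lower[OF wP] unfolding wA1 wA2 B_def by (simp add: algebra_simps)
    define \<gamma> where "\<gamma> = D * (\<alpha> - 2) / 2"
    have fib: "t powr (-D) * \<Phi>t - \<Phi>1 \<ge> D * \<Psi>1 * ((t powr \<gamma> - 1) / \<gamma>)"
      using Phi_fiber[OF um ui t D] unfolding \<Phi>t_def \<Phi>_def \<Phi>1_def \<Psi>1_def \<gamma>_def .
    have g2: "2 * s2 \<le> \<gamma>"
    proof -
      have "4 * s2 / D * D < (\<alpha> - 2) * D" using abig D by (intro mult_strict_right_mono) (auto simp: D_def)
      then have "4 * s2 < (\<alpha> - 2) * D" using D by simp
      then show ?thesis by (simp add: \<gamma>_def algebra_simps)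
    qed
    have sl1: "A1 * (t powr (2 * s1) - 1) / 2 \<le> s1 * A1 * ((t powr \<gamma> - 1) / \<gamma>)"
    proof -
      have "(t powr (2 * s1) - 1) / (2 * s1) \<le> (t powr \<gamma> - 1) / \<gamma>"
        using t s g2 by (intro slope_mono) auto
      then have "s1 * A1 * ((t powr (2 * s1) - 1) / (2 * s1)) \<le> s1 * A1 * ((t powr \<gamma> - 1) / \<gamma>)"
        using s A by (intro mult_left_mono) auto
      moreover have "s1 * A1 * ((t powr (2 * s1) - 1) / (2 * s1)) = A1 * (t powr (2 * s1) - 1) / 2"
        using s by (simp add: field_simps)
      ultimately show ?thesis by linarith
    qed
    have sl2: "A2 * (t powr (2 * s2) - 1) / 2 \<le> s2 * A2 * ((t powr \<gamma> - 1) / \<gamma>)"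
    proof -
      have "(t powr (2 * s2) - 1) / (2 * s2) \<le> (t powr \<gamma> - 1) / \<gamma>"
        using t s g2 by (intro slope_mono) auto
      then have "s2 * A2 * ((t powr (2 * s2) - 1) / (2 * s2)) \<le> s2 * A2 * ((t powr \<gamma> - 1) / \<gamma>)"
        using s A by (intro mult_left_mono) auto
      moreover have "s2 * A2 * ((t powr (2 * s2) - 1) / (2 * s2)) = A2 * (t powr (2 * s2) - 1) / 2"
        using s by (simp add: field_simps)
      ultimately show ?thesis by linarith
    qed
    have KX: "D * \<Psi>1 * ((t powr \<gamma> - 1) / \<gamma>) = s1 * A1 * ((t powr \<gamma> - 1) / \<gamma>) + s2 * A2 * ((t powr \<gamma> - 1) / \<gamma>)"
    proof -
      define X where "X = (t powr \<gamma> - 1) / \<gamma>"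
      have "D * \<Psi>1 * X = K * X" using KP by simp
      then show ?thesis unfolding X_def[symmetric] by (simp only: K_def distrib_right)
    qed
    have Iut: "B / 2 - t powr (-D) * \<Phi>t \<le> Ifun s1 s2 g u"
    proof -
      define X1 where "X1 = A1 * (t powr (2 * s1) - 1) / 2"
      define X2 where "X2 = A2 * (t powr (2 * s2) - 1) / 2"
      define Y1 where "Y1 = s1 * A1 * ((t powr \<gamma> - 1) / \<gamma>)"
      define Y2 where "Y2 = s2 * A2 * ((t powr \<gamma> - 1) / \<gamma>)"
      define Z where "Z = D * \<Psi>1 * ((t powr \<gamma> - 1) / \<gamma>)"
      define W where "W = t powr (-D) * \<Phi>t"
      have e: "B / 2 - (A1 + A2) / 2 = X1 + X2"
        by (simp add: X1_def X2_def B_def algebra_simps add_divide_distrib diff_divide_distrib)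
      have "X1 \<le> Y1" "X2 \<le> Y2" unfolding X1_def X2_def Y1_def Y2_def by (rule sl1, rule sl2)
      moreover have "Z = Y1 + Y2" unfolding Z_def Y1_def Y2_def by (rule KX)
      moreover have "Z \<le> W - \<Phi>1" unfolding Z_def W_def by (rule fib)
      ultimately have "B / 2 - (A1 + A2) / 2 \<le> W - \<Phi>1" using e by linarith
      then show ?thesis unfolding Iu W_def[symmetric] by (simp add: field_simps)
    qed
    have Phit0: "\<Phi>t \<ge> 0" unfolding \<Phi>t_def \<Phi>_def by (intro Bochner_Integration.integral_nonneg G_nonneg)
    have tD: "t powr (-D) > 0" using t by simp
    have scl: "\<Phi> (\<mu> * t powr (D/2)) \<ge> min (\<mu> powr 2) (\<mu> powr \<beta>) * \<Phi>t"
      unfolding \<Phi>_def \<Phi>t_def using Phi_scale[OF um ui _ \<mu>, of "t powr (D/2)"] t by simp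
    have mu2: "\<mu> powr 2 = \<mu>^2" using \<mu> by (simp add: powr_realpow)
    have main: "(1 \<le> \<mu> \<longrightarrow> Ifun s1 s2 g w \<le> \<mu>^2 * Ifun s1 s2 g u) \<and>
     (\<mu> < 1 \<longrightarrow> Ifun s1 s2 g w * (1 - (1 - \<mu> powr (\<beta> - 2)) / (2 * c)) \<le> Ifun s1 s2 g u)"
    proof (intro conjI impI)
      assume m1: "1 \<le> \<mu>"
      have "\<mu> powr 2 \<le> \<mu> powr \<beta>" using m1 a2 ab by (intro powr_mono) auto
      then have "min (\<mu> powr 2) (\<mu> powr \<beta>) = \<mu> powr 2" by (rule min_absorb1)
      then have "\<Phi> (\<mu> * t powr (D/2)) \<ge> \<mu>^2 * \<Phi>t" using scl mu2 by simp
      then have "t powr (-D) * \<Phi> (\<mu> * t powr (D/2)) \<ge> t powr (-D) * (\<mu>^2 * \<Phi>t)"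
        using tD by (intro mult_left_mono) auto
      then have "Ifun s1 s2 g w \<le> \<mu>^2 * (B / 2 - t powr (-D) * \<Phi>t)"
        unfolding Iw by (simp add: algebra_simps)
      also have "\<dots> \<le> \<mu>^2 * Ifun s1 s2 g u" using Iut by (intro mult_left_mono) auto
      finally show "Ifun s1 s2 g w \<le> \<mu>^2 * Ifun s1 s2 g u" .
    next
      assume m1: "\<mu> < 1"
      have "\<mu> powr \<beta> \<le> \<mu> powr 2" using m1 \<mu> a2 ab by (intro powr_mono') auto
      then have "min (\<mu> powr 2) (\<mu> powr \<beta>) = \<mu> powr \<beta>" by (rule min_absorb2)
      then have mb: "\<Phi> (\<mu> * t powr (D/2)) \<ge> \<mu> powr \<beta> * \<Phi>t" using scl by simp
      then have "t powr (-D) * \<Phi> (\<mu> * t powr (D/2)) \<ge> t powr (-D) * (\<mu> powr \<beta> * \<Phi>t)"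
        using tD by (intro mult_left_mono) auto
      moreover have "\<mu> powr \<beta> * (B / 2 - t powr (-D) * \<Phi>t) + (\<mu>^2 - \<mu> powr \<beta>) * B / 2
          = \<mu>^2 * B / 2 - t powr (-D) * (\<mu> powr \<beta> * \<Phi>t)" by (simp add: field_simps)
      ultimately have 1: "Ifun s1 s2 g w \<le> \<mu> powr \<beta> * (B / 2 - t powr (-D) * \<Phi>t) + (\<mu>^2 - \<mu> powr \<beta>) * B / 2"
        unfolding Iw by linarith
      have mb1: "\<mu> powr \<beta> \<le> 1" using m1 \<mu> a2 ab by (simp add: powr_le1)
      have "\<mu> powr \<beta> * (B / 2 - t powr (-D) * \<Phi>t) \<le> \<mu> powr \<beta> * Ifun s1 s2 g u"
        using Iut by (intro mult_left_mono) auto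
      also have "\<dots> \<le> Ifun s1 s2 g u" using mb1 Iu0 by (simp add: mult_left_le_one_le)
      finally have 2: "\<mu> powr \<beta> * (B / 2 - t powr (-D) * \<Phi>t) \<le> Ifun s1 s2 g u" .
      define E where "E = 1 - \<mu> powr (\<beta> - 2)"
      have E0: "0 \<le> E" using m1 \<mu> a2 ab by (simp add: E_def powr_le1)
      have mbeta: "\<mu> powr \<beta> = \<mu>^2 * \<mu> powr (\<beta> - 2)"
      proof -
        have "\<mu> powr \<beta> = \<mu> powr (2 + (\<beta> - 2))" by simp
        also have "\<dots> = \<mu> powr 2 * \<mu> powr (\<beta> - 2)" by (rule powr_add)
        finally show ?thesis using mu2 by simp
      qed
      have "(\<mu>^2 - \<mu> powr \<beta>) * B / 2 = E * (\<mu>^2 * B) / 2"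
        by (simp add: E_def mbeta algebra_simps)
      also have "\<dots> \<le> E * (Ifun s1 s2 g w / c) / 2"
      proof -
        have "\<mu>^2 * B \<le> Ifun s1 s2 g w / c" using Iwl c by (simp add: field_simps)
        then show ?thesis using E0 by (intro divide_right_mono mult_left_mono) auto
      qed
      finally have 3: "(\<mu>^2 - \<mu> powr \<beta>) * B / 2 \<le> E * (Ifun s1 s2 g w / c) / 2" .
      have "Ifun s1 s2 g w * (1 - E / (2 * c)) = Ifun s1 s2 g w - E * (Ifun s1 s2 g w / c) / 2"
        using c by (simp add: field_simps)
      also have "\<dots> \<le> Ifun s1 s2 g u" using 1 2 3 by linarith
      finally show "Ifun s1 s2 g w * (1 - (1 - \<mu> powr (\<beta> - 2)) / (2 * c)) \<le> Ifun s1 s2 g u"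
        by (simp add: E_def)
    qed
    show ?thesis using main wP by blast
  next
    case Knp: False
    have K0: "K = 0" using Knp s A unfolding K_def by (smt (verit) mult_nonneg_nonneg)
    have \<Psi>10: "\<Psi>1 = 0" using KP K0 D by simp
    define w where "w = sc (\<mu> * 1 powr (real DIM('a) / 2)) 1 u"
    note ff = fib_facts[OF uH uL less_imp_le[OF a] zero_less_one, where \<mu>=\<mu>, folded w_def]
    have wH: "w \<in> Hs1s2 s1 s2" and wL: "L2_sq w = ennreal (\<mu>^2 * a)" using ff a by auto
    have A0: "A1 = 0" "A2 = 0" using K0 s A unfolding K_def by (smt (verit) mult_nonneg_nonneg mult_pos_pos)+
    have wA1: "enn2real (gag_sq s1 w) = 0" using ff(3) a A0 by (simp add: A1_def)
    have wA2: "enn2real (gag_sq s2 w) = 0" using ff(4) a A0 by (simp add: A2_def)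
    have wPsi: "(\<integral>x. Gtil g (w x) \<partial>lborel) = (\<integral>x. Gtil g (\<mu> * u x) \<partial>lborel)"
      using ff(5)[of "Gtil g"] a by simp
    have wPhi: "(\<integral>x. Gprim g (w x) \<partial>lborel) = (\<integral>x. Gprim g (\<mu> * u x) \<partial>lborel)"
      using ff(5)[of "Gprim g"] a by simp
    have Psi0: "(\<integral>x. Gtil g (\<mu> * u x) \<partial>lborel) = 0"
    proof (cases "integrable lborel (\<lambda>x. Gtil g (u x))")
      case True
      have "AE x in lborel. Gtil g (u x) = 0"
        using \<Psi>10 unfolding \<Psi>1_def
        by (subst (asm) integral_nonneg_eq_0_iff_AE[OF True]) (auto intro: Gt_nonneg)
      then have "AE x in lborel. Gtil g (\<mu> * u x) = 0"
      proof eventually_elim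
        case (elim x)
        have "Gtil g (\<mu> * u x) \<le> (\<beta> - 2) / (\<alpha> - 2) * (\<mu> powr \<alpha> + \<mu> powr \<beta>) * Gtil g (u x)"
          by (rule Gt_bound[OF \<mu>])
        with elim Gt_nonneg[of "\<mu> * u x"] show ?case by simp
      qed
      then show ?thesis by (rule integral_eq_zero_AE)
    next
      case False
      have "\<not> integrable lborel (\<lambda>x. Gtil g (\<mu> * u x))"
      proof
        assume i: "integrable lborel (\<lambda>x. Gtil g (\<mu> * u x))"
        have m: "(\<lambda>x. \<mu> * u x) \<in> borel_measurable lborel" using um by simp
        have "integrable lborel (\<lambda>x. Gtil g ((1/\<mu>) * (\<mu> * u x)))"
          using int_Gt[OF m i, of "1/\<mu>"] \<mu> by simp
        then have "integrable lborel (\<lambda>x. Gtil g (u x))" using \<mu> by simp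
        with False show False by simp
      qed
      then show ?thesis by (rule not_integrable_integral_eq)
    qed
    have Pw: "Pinf s1 s2 g w = 0" unfolding Pinf_def wA1 wA2 wPsi Psi0 by simp
    have wP: "w \<in> Pmfd s1 s2 g (\<mu>^2 * a)" using wH wL Pw by (simp add: Pmfd_def Sa_def)
    have "Ifun s1 s2 g w \<le> 0"
      unfolding Ifun_def wA1 wA2 wPhi by (simp add: Bochner_Integration.integral_nonneg G_nonneg)
    moreover have "Ifun s1 s2 g w \<ge> 0" using Iw_lower[OF wP] c unfolding wA1 wA2 by simp
    ultimately have Iw0: "Ifun s1 s2 g w = 0" by simp
    show ?thesis using wP Iw0 Iu0 by (intro bexI[of _ w]) auto
  qed
qed

end


theorem lemma3p3:
  fixes s1 s2 \<alpha> \<beta> :: real and g :: "real \<Rightarrow> real"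
  defines "d \<equiv> real DIM('a::euclidean_space)"
  assumes "0 < s1" "s1 < s2" "s2 < 1"
    and "2 * s1 < d" "d < 2 * s1 * s2 / (s2 - s1)"
    and G1: "continuous_on UNIV g" "\<And>s. g (- s) = - g s"
    and G2: "2 + 4 * s2 / d < \<alpha>" "\<alpha> < \<beta>" "\<beta> < 2 * d / (d - 2 * s1)"
      "\<And>s. \<alpha> * Gprim g s \<le> g s * s" "\<And>s. g s * s \<le> \<beta> * Gprim g s"
    and G3: "\<And>s. Gtil g differentiable (at s)"
      "\<And>s. deriv (Gtil g) s * s \<ge> \<alpha> * Gtil g s"
  shows "continuous_on {0<..} (m_level TYPE('a) s1 s2 g)"
proof -
  have s: "0 < s1" "s1 < s2" using assms by auto
  have dpos: "0 < d" by (simp add: d_def)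
  have abig: "2 + 4 * s2 / real DIM('a) < \<alpha>" using G2(1) by (simp add: d_def)
  have a2: "2 < \<alpha>"
  proof -
    have "0 < 4 * s2 / d" using s dpos by simp
    then show ?thesis using G2(1) by linarith
  qed
  interpret gset g \<alpha> \<beta>
    by unfold_locales (use G1 G2 G3 a2 in auto)
  define m where "m = m_level TYPE('a) s1 s2 g"
  define I where "I = (Ifun s1 s2 g :: ('a \<Rightarrow> real) \<Rightarrow> real)"
  define P where "P b = (Pmfd s1 s2 g b :: ('a \<Rightarrow> real) set)" for b
  have m_eq: "m b = Inf (I ` P b)" for b by (simp add: m_def m_level_def I_def P_def)
  define c where "c = 1/2 - 2 * s2 / (real DIM('a) * (\<alpha> - 2))"
  have c: "0 < c"
  proof -
    have "4 * s2 / d * d < (\<alpha> - 2) * d" using G2(1) dpos by (intro mult_strict_right_mono) auto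
    then have "4 * s2 < (\<alpha> - 2) * d" using dpos by simp
    then have "2 * s2 / (d * (\<alpha> - 2)) < 1/2" using dpos a2 by (simp add: field_simps)
    then show ?thesis by (simp add: c_def d_def)
  qed
  define e where "e r = (1 - sqrt r powr (\<beta> - 2)) / (2 * c)" for r
  have I0: "I u \<ge> 0" if "u \<in> P b" for u b
  proof -
    have "0 \<le> c * (enn2real (gag_sq s1 u) + enn2real (gag_sq s2 u))" using c by simp
    also have "\<dots> \<le> I u" using I_lower[OF s abig, of u b] that by (simp add: I_def P_def c_def)
    finally show ?thesis .
  qed
  have tr: "\<exists>w \<in> P b. (a \<le> b \<longrightarrow> I w \<le> (b / a) * I u) \<and> (b < a \<longrightarrow> I w * (1 - e (b / a)) \<le> I u)"
    if ab: "0 < a" "0 < b" and u: "u \<in> P a" for u a b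
  proof -
    define \<mu> where "\<mu> = sqrt (b / a)"
    have \<mu>: "0 < \<mu>" using ab by (simp add: \<mu>_def)
    have mu2: "\<mu>^2 = b / a" using ab by (simp add: \<mu>_def)
    have mu2a: "\<mu>^2 * a = b" using ab mu2 by simp
    have le: "1 \<le> \<mu> \<longleftrightarrow> a \<le> b" using ab by (simp add: \<mu>_def)
    have lt: "\<mu> < 1 \<longleftrightarrow> b < a" using ab by (simp add: \<mu>_def)
    from transfer[OF s abig _ ab(1) \<mu>, of u] u
    obtain w where w: "w \<in> P b"
      and h1: "1 \<le> \<mu> \<longrightarrow> I w \<le> \<mu>^2 * I u"
      and h2: "\<mu> < 1 \<longrightarrow> I w * (1 - (1 - \<mu> powr (\<beta> - 2)) / (2 * c)) \<le> I u"
      unfolding P_def I_def c_def mu2a by blast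
    show ?thesis
      using w h1 h2 unfolding le lt mu2 by (intro bexI[of _ w]) (auto simp: e_def \<mu>_def)
  qed
  show ?thesis
  proof (cases "\<exists>a>0. P a = {}")
    case True
    then obtain a0 where a0: "0 < a0" "P a0 = {}" by blast
    have allE: "P b = {}" if "0 < b" for b
    proof (rule ccontr)
      assume "P b \<noteq> {}"
      then obtain u where "u \<in> P b" by blast
      from tr[OF that a0(1) this] a0 show False by blast
    qed
    have "continuous_on {0<..} (\<lambda>b. Inf (I ` {}))" by (rule continuous_on_const)
    then show ?thesis unfolding m_def[symmetric]
      by (rule continuous_on_cong[THEN iffD1, rotated 2]) (auto simp: m_eq allE)
  next
    case False
    then have ne: "P a \<noteq> {}" if "0 < a" for a using that by auto
    have bdd: "bdd_below (I ` P a)" for a by (rule bdd_belowI[of _ 0]) (auto intro: I0)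
    have m_le: "m a \<le> I u" if "u \<in> P a" for a u
      unfolding m_eq using that bdd by (intro cInf_lower) auto
    have m_ge: "x \<le> m a" if "0 < a" "\<And>u. u \<in> P a \<Longrightarrow> x \<le> I u" for a x
      unfolding m_eq using that ne[OF that(1)] by (intro cInf_greatest) auto
    have m0: "0 \<le> m a" if "0 < a" for a using m_ge[OF that] I0 by blast
    have up: "m b \<le> (b / a) * m a" if hup: "0 < a" "a \<le> b" for a b
    proof -
      have b: "0 < b" using that by simp
      have "m b * (a / b) \<le> m a"
      proof (rule m_ge[OF that(1)])
        fix u assume u: "u \<in> P a"
        obtain w where w: "w \<in> P b" "I w \<le> (b / a) * I u" using tr[OF hup(1) b u] hup by blast
        have "m b * (a / b) \<le> I w * (a / b)" using m_le[OF w(1)] that b by (intro mult_right_mono) auto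
        also have "\<dots> \<le> (b / a) * I u * (a / b)" using w(2) that b by (intro mult_right_mono) auto
        also have "\<dots> = I u" using that b by simp
        finally show "m b * (a / b) \<le> I u" .
      qed
      then show ?thesis using that b by (simp add: field_simps)
    qed
    have down: "m b * (1 - e (b / a)) \<le> m a" if hdn: "0 < b" "b \<le> a" for a b
    proof (cases "b = a")
      case True
      then show ?thesis using that by (simp add: e_def)
    next
      case False
      then have ba: "b < a" using that by simp
      have a: "0 < a" using that by simp
      show ?thesis
      proof (cases "1 - e (b / a) \<ge> 0")
        case True
        show ?thesis
        proof (rule m_ge[OF a])
          fix u assume u: "u \<in> P a"
          obtain w where w: "w \<in> P b" "I w * (1 - e (b / a)) \<le> I u" using tr[OF a hdn(1) u] ba by blast
          have "m b * (1 - e (b / a)) \<le> I w * (1 - e (b / a))"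
            using m_le[OF w(1)] True by (intro mult_right_mono) auto
          then show "m b * (1 - e (b / a)) \<le> I u" using w(2) by linarith
        qed
      next
        case False
        then have "m b * (1 - e (b / a)) \<le> 0" using m0[OF that(1)] by (simp add: mult_nonneg_nonpos)
        then show ?thesis using m0[OF a] by linarith
      qed
    qed
    show ?thesis unfolding m_def[symmetric]
    proof (intro continuous_at_imp_continuous_on ballI)
      fix a :: real assume "a \<in> {0<..}"
      then have a: "0 < a" by simp
      have e1: "((\<lambda>b. e (b / a)) \<longlongrightarrow> 0) (at a)"
      proof -
        have "((\<lambda>b. (1 - sqrt (b / a) powr (\<beta> - 2)) / (2 * c)) \<longlongrightarrow> (1 - sqrt (a / a) powr (\<beta> - 2)) / (2 * c)) (at a)"
          using a c by (intro tendsto_intros) auto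
        then show ?thesis using a c by (simp add: e_def)
      qed
      have e2: "((\<lambda>b. e (a / b)) \<longlongrightarrow> 0) (at a)"
      proof -
        have "((\<lambda>b. (1 - sqrt (a / b) powr (\<beta> - 2)) / (2 * c)) \<longlongrightarrow> (1 - sqrt (a / a) powr (\<beta> - 2)) / (2 * c)) (at a)"
          using a c by (intro tendsto_intros) auto
        then show ?thesis using a c by (simp add: e_def)
      qed
      define L where "L b = m a * min (b / a) (1 - e (a / b))" for b
      define U where "U b = max ((b / a) * m a) (m a / (1 - e (b / a)))" for b
      have evpos: "eventually (\<lambda>b. 0 < b) (at a)"
        using order_tendstoD(1)[OF tendsto_ident_at a] by simp
      have evE: "eventually (\<lambda>b. 0 < 1 - e (b / a)) (at a)"
      proof -
        have lim: "((\<lambda>b. 1 - e (b / a)) \<longlongrightarrow> 1) (at a)" using tendsto_diff[OF tendsto_const e1] by simp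
        show ?thesis using order_tendstoD(1)[OF lim, of 0] by simp
      qed
      have "(m \<longlongrightarrow> m a) (at a)"
      proof (rule tendsto_sandwich[where f=L and h=U])
        show "eventually (\<lambda>b. L b \<le> m b) (at a)"
          using evpos
        proof eventually_elim
          case (elim b)
          show ?case
          proof (cases "a \<le> b")
            case True
            have "m a * min (b / a) (1 - e (a / b)) \<le> m a * (1 - e (a / b))"
              using m0[OF a] by (intro mult_left_mono) auto
            also have "\<dots> \<le> m b" using down[of a b] a True by (simp add: mult.commute)
            finally show ?thesis by (simp add: L_def)
          next
            case False
            have "m a \<le> (a / b) * m b" using up[of b a] elim False by simp
            then have "(b / a) * m a \<le> (b / a) * ((a / b) * m b)" using elim a by (intro mult_left_mono) auto
            then have "(b / a) * m a \<le> m b" using elim a by simp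
            moreover have "m a * min (b / a) (1 - e (a / b)) \<le> m a * (b / a)"
              using m0[OF a] by (intro mult_left_mono) auto
            ultimately show ?thesis by (simp add: L_def mult.commute)
          qed
        qed
        show "eventually (\<lambda>b. m b \<le> U b) (at a)"
          using evpos evE
        proof eventually_elim
          case (elim b)
          show ?case
          proof (cases "a \<le> b")
            case True
            then show ?thesis using up[OF a True] by (simp add: U_def)
          next
            case False
            have "m b * (1 - e (b / a)) \<le> m a" using down[of b a] elim False by simp
            then have "m b \<le> m a / (1 - e (b / a))" using elim by (simp add: pos_le_divide_eq)
            then show ?thesis by (simp add: U_def)
          qed
        qed
        show "(L \<longlongrightarrow> m a) (at a)"
        proof -
          have "(L \<longlongrightarrow> m a * min (a / a) (1 - 0)) (at a)"
            unfolding L_def[abs_def] using a by (intro tendsto_intros e2) auto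
          then show ?thesis using a by simp
        qed
        show "(U \<longlongrightarrow> m a) (at a)"
        proof -
          have "(U \<longlongrightarrow> max ((a / a) * m a) (m a / (1 - 0))) (at a)"
            unfolding U_def[abs_def] using a by (intro tendsto_intros e1) auto
          then show ?thesis using a by simp
        qed
      qed
      then show "isCont m a" by (simp add: isCont_def)
    qed
  qed
qed


end
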